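(* Let $f:(M^n,h)\to(\tilde M^{n+1},\tilde h)$ be an isometrically immersed hypersurface in a Riemannian manifold, and let $\tilde W$ be a Killing vector field of $\tilde h$ with $\|\tilde W\|_{\tilde h}<1$. Let $N$ be a unit normal vector field along $f$, $w=\langle N,\tilde W\rangle$, and $H$ the mean curvature of $f$ with respect to $N$. Then for any $\tilde X\in T\tilde M$ along $f$, \[B^{\eta\beta}\tilde W_\beta\tilde W_{\alpha|\eta}\tilde W^\alpha=\langle\nabla^{\tilde M}_{df(W)}\tilde W,\tilde W\rangle,\qquad \tilde W_\tau(\delta^\tau_\gamma-B^\tau_\gamma)\tilde X^\gamma=w\langle N,\tilde X\rangle,\] \[B^{\eta\beta}\tilde W_\beta\tilde W_{\alpha|\eta}(\delta^\alpha_\gamma-B^\alpha_\gamma)\tilde X^\gamma=\langle\nabla^{\tilde M}_{df(W)}\tilde W,N\rangle\langle N,\tilde X\rangle,\qquad h^{ij}\tau^\alpha_{ij}\tilde W_\alpha=nHw,\] \[\tilde W_\delta\tilde W_\tau A^{i\delta}A^{j\tau}\tau^\alpha_{ij}\tilde X_\alpha=-\Big[\langle df(\nabla w),\tilde W\rangle+\tfrac12N(\|\tilde W\|^2_{\tilde h})\Big]\langle N,\tilde X\rangle,\] \[\tilde W_\delta\tilde W_\tau A^{i\delta}A^{j\tau}\tau^\alpha_{ij}\tilde W_\alpha=-\Big[\langle df(\nabla w),\tilde W\rangle+\tfrac12N(\|\tilde W\|^2_{\tilde h})\Big]w,\] \[\langle\nabla^{\tilde M}_{df(W)}\tilde W,N\rangle=-\tfrac12N(\|\tilde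 W\|^2_{\tilde h}),\qquad \langle\nabla^{\tilde M}_{df(W)}\tilde W,\tilde W\rangle=-\tfrac12N(\|\tilde W\|^2_{\tilde h})\,w.\]
   Context: $\langle\cdot,\cdot\rangle$ denotes $\tilde h$, $\nabla^{\tilde M}$ its Levi-Civita connection. Locally $f$ is $\tilde x^\alpha=f^\alpha(x^1,\dots,x^n)$, indices $1\le i,j,k\le n$, $1\le\alpha,\beta,\gamma,\eta,\delta,\tau\le n+1$, summation convention. $z^\alpha_i=\partial f^\alpha/\partial x^i$, $h_{ij}=\tilde h_{\alpha\beta}z^\alpha_iz^\beta_j$, $(h^{ij})=(h_{ij})^{-1}$, $\tilde W_\alpha=\tilde h_{\alpha\beta}\tilde W^\beta$, $\tilde X_\alpha=\tilde h_{\alpha\beta}\tilde X^\beta$, $A^{i\alpha}=h^{ij}z^\alpha_j$, $B^{\alpha\beta}=h^{ij}z^\alpha_iz^\beta_j$, $B^\alpha_\beta=B^{\alpha\delta}\tilde h_{\delta\beta}$. $\tilde W^\beta_{|\eta}$ are the components of $\nabla^{\tilde M}\tilde W$, $\tilde W_{\alpha|\eta}=\tilde h_{\alpha\beta}\tilde W^\beta_{|\eta}$. $W$ is the vector field on $M$ with components $W^j=h^{ij}\tilde W_\alpha z^\alpha_i$. $\tau^\alpha_{ij}=\frac{\partial^2f^\alpha}{\partial x^i\partial x^j}+\tilde\Gamma^\alpha_{\tau\delta}z^\tau_jz^\delta_i-\Gamma^k_{ij}z^\alpha_k$ is the second fundamental form of $f$, and $H$ is defined by $h^{ij}\tau^\alpha_{ij}\partial/\partial\tilde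 x^\alpha=nHN$. $\nabla w$ is the gradient of $w$ with respect to $h$. *)

theory Defs
  imports "HOL-Analysis.Analysis"
begin

text \<open>Everything is in local coordinates: M is represented by an open chart domain
U in real^'n, the ambient manifold by an open chart domain V in real^'m with
CARD('m) = CARD('n) + 1.  Vectors/tensors are component arrays.\<close>

definition pd :: "'k::finite \<Rightarrow> (real^'k \<Rightarrow> 'b::real_normed_vector) \<Rightarrow> real^'k \<Rightarrow> 'b" where
  "pd i g x = vector_derivative (\<lambda>t. g (x + t *\<^sub>R axis i 1)) (at 0)"

fun iter_pd :: "'k::finite list \<Rightarrow> (real^'k \<Rightarrow> 'b::real_normed_vector) \<Rightarrow> real^'k \<Rightarrow> 'b" where
  "iter_pd [] g = g"
| "iter_pd (i # is) g = pd i (iter_pd is g)"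

definition Csmooth_on :: "(real^'k::finite) set \<Rightarrow> (real^'k \<Rightarrow> 'b::real_normed_vector) \<Rightarrow> bool" where
  "Csmooth_on S g \<longleftrightarrow> (\<forall>is. iter_pd is g differentiable_on S)"

definition kdelta :: "'k \<Rightarrow> 'k \<Rightarrow> real" where
  "kdelta a b = (if a = b then 1 else 0)"

definition g_inner :: "(real^'k \<Rightarrow> real^'k^'k) \<Rightarrow> real^'k \<Rightarrow> real^'k \<Rightarrow> real^'k \<Rightarrow> real" where
  "g_inner g p u v = (\<Sum>a\<in>UNIV. \<Sum>b\<in>UNIV. g p $ a $ b * u $ a * v $ b)"

definition lower :: "(real^'k \<Rightarrow> real^'k^'k) \<Rightarrow> real^'k \<Rightarrow> real^'k \<Rightarrow> real^'k::finite" where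
  "lower g p u = (\<chi> a. \<Sum>b\<in>UNIV. g p $ a $ b * u $ b)"

definition christoffel :: "(real^'k \<Rightarrow> real^'k^'k) \<Rightarrow> real^'k \<Rightarrow> 'k \<Rightarrow> 'k \<Rightarrow> 'k \<Rightarrow> real" where
  "christoffel g p a b c = (1/2) * (\<Sum>d\<in>UNIV. matrix_inv (g p) $ a $ d *
      (pd b (\<lambda>q. g q $ d $ c) p + pd c (\<lambda>q. g q $ d $ b) p - pd d (\<lambda>q. g q $ b $ c) p))"

definition riemannian_metric_on :: "(real^'k::finite) set \<Rightarrow> (real^'k \<Rightarrow> real^'k^'k) \<Rightarrow> bool" where
  "riemannian_metric_on V g \<longleftrightarrow> open V \<and> Csmooth_on V g \<and>
     (\<forall>p\<in>V. (\<forall>a b. g p $ a $ b = g p $ b $ a) \<and> (\<forall>u. u \<noteq> 0 \<longrightarrow> g_inner g p u u > 0))"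

definition killing_on :: "(real^'k::finite) set \<Rightarrow> (real^'k \<Rightarrow> real^'k^'k) \<Rightarrow> (real^'k \<Rightarrow> real^'k) \<Rightarrow> bool" where
  "killing_on V g W \<longleftrightarrow> Csmooth_on V W \<and>
     (\<forall>p\<in>V. \<forall>a b. (\<Sum>c\<in>UNIV. W p $ c * pd c (\<lambda>q. g q $ a $ b) p)
                   + (\<Sum>c\<in>UNIV. g p $ c $ b * pd a (\<lambda>q. W q $ c) p)
                   + (\<Sum>c\<in>UNIV. g p $ a $ c * pd b (\<lambda>q. W q $ c) p) = 0)"

definition cov_deriv :: "(real^'k \<Rightarrow> real^'k^'k) \<Rightarrow> (real^'k \<Rightarrow> real^'k) \<Rightarrow> real^'k \<Rightarrow> 'k \<Rightarrow> 'k \<Rightarrow> real" where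
  "cov_deriv g W p b e = pd e (\<lambda>q. W q $ b) p + (\<Sum>c\<in>UNIV. christoffel g p b e c * W p $ c)"

definition covd_along :: "(real^'k \<Rightarrow> real^'k^'k) \<Rightarrow> (real^'k \<Rightarrow> real^'k) \<Rightarrow> real^'k \<Rightarrow> real^'k \<Rightarrow> real^'k::finite" where
  "covd_along g W p v = (\<chi> b. \<Sum>e\<in>UNIV. v $ e * cov_deriv g W p b e)"

abbreviation zf :: "(real^'n::finite \<Rightarrow> real^'m::finite) \<Rightarrow> real^'n \<Rightarrow> 'n \<Rightarrow> real^'m" where
  "zf f x i \<equiv> pd i f x"

definition induced_metric :: "(real^'m::finite \<Rightarrow> real^'m^'m) \<Rightarrow> (real^'n::finite \<Rightarrow> real^'m) \<Rightarrow> real^'n \<Rightarrow> real^'n^'n" where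
  "induced_metric g f x = (\<chi> i j. \<Sum>a\<in>UNIV. \<Sum>b\<in>UNIV. g (f x) $ a $ b * zf f x i $ a * zf f x j $ b)"

definition hinv :: "(real^'m::finite \<Rightarrow> real^'m^'m) \<Rightarrow> (real^'n::finite \<Rightarrow> real^'m) \<Rightarrow> real^'n \<Rightarrow> real^'n^'n" where
  "hinv g f x = matrix_inv (induced_metric g f x)"

definition immersion_on :: "(real^'n::finite) set \<Rightarrow> (real^'n \<Rightarrow> real^'m::finite) \<Rightarrow> bool" where
  "immersion_on U f \<longleftrightarrow> open U \<and> Csmooth_on U f \<and>
     (\<forall>y\<in>U. \<forall>v::real^'n. (\<Sum>i\<in>UNIV. v $ i *\<^sub>R zf f y i) = 0 \<longrightarrow> v = 0)"

definition unit_normal_on :: "(real^'n::finite) set \<Rightarrow> (real^'m::finite \<Rightarrow> real^'m^'m) \<Rightarrow> (real^'n \<Rightarrow> real^'m) \<Rightarrow> (real^'n \<Rightarrow> real^'m) \<Rightarrow> bool" where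
  "unit_normal_on U g f N \<longleftrightarrow> Csmooth_on U N \<and>
     (\<forall>y\<in>U. g_inner g (f y) (N y) (N y) = 1 \<and> (\<forall>i. g_inner g (f y) (N y) (zf f y i) = 0))"

definition sff :: "(real^'m::finite \<Rightarrow> real^'m^'m) \<Rightarrow> (real^'n::finite \<Rightarrow> real^'m) \<Rightarrow> real^'n \<Rightarrow> 'm \<Rightarrow> 'n \<Rightarrow> 'n \<Rightarrow> real" where
  "sff g f x a i j = pd i (\<lambda>y. zf f y j $ a) x
     + (\<Sum>t\<in>UNIV. \<Sum>d\<in>UNIV. christoffel g (f x) a t d * zf f x j $ t * zf f x i $ d)
     - (\<Sum>k\<in>UNIV. christoffel (induced_metric g f) x k i j * zf f x k $ a)"

definition Acoef :: "(real^'m::finite \<Rightarrow> real^'m^'m) \<Rightarrow> (real^'n::finite \<Rightarrow> real^'m) \<Rightarrow> real^'n \<Rightarrow> 'n \<Rightarrow> 'm \<Rightarrow> real" where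
  "Acoef g f x i a = (\<Sum>j\<in>UNIV. hinv g f x $ i $ j * zf f x j $ a)"

definition Bup :: "(real^'m::finite \<Rightarrow> real^'m^'m) \<Rightarrow> (real^'n::finite \<Rightarrow> real^'m) \<Rightarrow> real^'n \<Rightarrow> 'm \<Rightarrow> 'm \<Rightarrow> real" where
  "Bup g f x a b = (\<Sum>i\<in>UNIV. \<Sum>j\<in>UNIV. hinv g f x $ i $ j * zf f x i $ a * zf f x j $ b)"

definition Bmix :: "(real^'m::finite \<Rightarrow> real^'m^'m) \<Rightarrow> (real^'n::finite \<Rightarrow> real^'m) \<Rightarrow> real^'n \<Rightarrow> 'm \<Rightarrow> 'm \<Rightarrow> real" where
  "Bmix g f x a b = (\<Sum>d\<in>UNIV. Bup g f x a d * g (f x) $ d $ b)"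

definition tang_field :: "(real^'m::finite \<Rightarrow> real^'m^'m) \<Rightarrow> (real^'m \<Rightarrow> real^'m) \<Rightarrow> (real^'n::finite \<Rightarrow> real^'m) \<Rightarrow> real^'n \<Rightarrow> real^'n" where
  "tang_field g W f x = (\<chi> j. \<Sum>i\<in>UNIV. \<Sum>a\<in>UNIV. hinv g f x $ i $ j * lower g (f x) (W (f x)) $ a * zf f x i $ a)"

definition push :: "(real^'n::finite \<Rightarrow> real^'m::finite) \<Rightarrow> real^'n \<Rightarrow> real^'n \<Rightarrow> real^'m" where
  "push f x v = (\<Sum>j\<in>UNIV. v $ j *\<^sub>R zf f x j)"

definition wfun :: "(real^'m::finite \<Rightarrow> real^'m^'m) \<Rightarrow> (real^'m \<Rightarrow> real^'m) \<Rightarrow> (real^'n::finite \<Rightarrow> real^'m) \<Rightarrow> (real^'n \<Rightarrow> real^'m) \<Rightarrow> real^'n \<Rightarrow> real" where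
  "wfun g W f N y = g_inner g (f y) (N y) (W (f y))"

definition grad_h :: "(real^'m::finite \<Rightarrow> real^'m^'m) \<Rightarrow> (real^'n::finite \<Rightarrow> real^'m) \<Rightarrow> (real^'n \<Rightarrow> real) \<Rightarrow> real^'n \<Rightarrow> real^'n" where
  "grad_h g f \<phi> x = (\<chi> j. \<Sum>i\<in>UNIV. hinv g f x $ i $ j * pd i \<phi> x)"

definition normsq :: "(real^'k \<Rightarrow> real^'k^'k) \<Rightarrow> (real^'k \<Rightarrow> real^'k) \<Rightarrow> real^'k::finite \<Rightarrow> real" where
  "normsq g W q = g_inner g q (W q) (W q)"

definition dirderiv :: "(real^'k::finite \<Rightarrow> real) \<Rightarrow> real^'k \<Rightarrow> real^'k \<Rightarrow> real" where
  "dirderiv \<phi> p v = (\<Sum>a\<in>UNIV. v $ a * pd a \<phi> p)"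

end

theory Submission
  imports Defs
begin

lemma pd_has_derivative:
  assumes "(F has_derivative D) (at y)"
  shows "pd i F y = D (axis i 1)"
proof -
  have l: "linear D" using assms has_derivative_linear by blast
  have "((\<lambda>t::real. y + t *\<^sub>R axis i 1) has_derivative (\<lambda>t. t *\<^sub>R axis i 1)) (at 0)"
    by (auto intro!: derivative_eq_intros)
  from has_derivative_compose[OF this, of F D] assms
  have "((\<lambda>t. F (y + t *\<^sub>R axis i 1)) has_derivative (\<lambda>t. D (t *\<^sub>R axis i 1))) (at 0)"
    by (simp add: o_def)
  then have "((\<lambda>t. F (y + t *\<^sub>R axis i 1)) has_vector_derivative D (axis i 1)) (at 0)"
    unfolding has_vector_derivative_def using linear_scale[OF l] by simp
  then show ?thesis unfolding pd_def by (rule vector_derivative_at)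
qed

lemma vec_expand_R: "(\<Sum>c\<in>UNIV. (v::real^'k) $ c *\<^sub>R axis c 1) = v"
  using basis_expansion[of v] by (simp add: scalar_mult_eq_scaleR)

lemma linear_expand_axis:
  assumes "linear D"
  shows "D (v::real^'k) = (\<Sum>c\<in>UNIV. v $ c *\<^sub>R D (axis c 1))"
proof -
  have "D v = D (\<Sum>c\<in>UNIV. v $ c *\<^sub>R axis c 1)" by (simp add: vec_expand_R)
  also have "\<dots> = (\<Sum>c\<in>UNIV. v $ c *\<^sub>R D (axis c 1))"
    using assms by (simp add: linear_sum linear_scale)
  finally show ?thesis .
qed

lemma frechet_expand:
  assumes "F differentiable (at y)"
  shows "(F has_derivative (\<lambda>v. \<Sum>c\<in>UNIV. v $ c *\<^sub>R pd c F y)) (at (y::real^'k))"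
proof -
  obtain D where D: "(F has_derivative D) (at y)" using assms differentiable_def by blast
  have "D = (\<lambda>v. \<Sum>c\<in>UNIV. v $ c *\<^sub>R pd c F y)"
  proof
    fix v show "D v = (\<Sum>c\<in>UNIV. v $ c *\<^sub>R pd c F y)"
      by (subst linear_expand_axis[OF has_derivative_linear[OF D]]) (simp add: pd_has_derivative[OF D])
  qed
  with D show ?thesis by simp
qed

lemma pd_nth:
  assumes "F differentiable (at y)"
  shows "pd i (\<lambda>y. F y $ a) y = pd i F y $ a"
proof -
  obtain D where D: "(F has_derivative D) (at y)" using assms differentiable_def by blast
  have "((\<lambda>y. F y $ a) has_derivative (\<lambda>v. D v $ a)) (at y)"
    using bounded_linear.has_derivative[OF bounded_linear_vec_nth D] .
  then show ?thesis using pd_has_derivative D by metis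
qed

lemma pd_mult:
  fixes \<phi> \<psi> :: "real^'k \<Rightarrow> real"
  assumes "\<phi> differentiable (at y)" "\<psi> differentiable (at y)"
  shows "pd i (\<lambda>y. \<phi> y * \<psi> y) y = pd i \<phi> y * \<psi> y + \<phi> y * pd i \<psi> y"
proof -
  obtain D where D: "(\<phi> has_derivative D) (at y)" using assms differentiable_def by blast
  obtain E where E: "(\<psi> has_derivative E) (at y)" using assms differentiable_def by blast
  have "((\<lambda>y. \<phi> y * \<psi> y) has_derivative (\<lambda>v. \<phi> y * E v + D v * \<psi> y)) (at y)"
    using has_derivative_mult[OF D E] .
  then have "pd i (\<lambda>y. \<phi> y * \<psi> y) y = \<phi> y * E (axis i 1) + D (axis i 1) * \<psi> y"
    by (rule pd_has_derivative)
  then show ?thesis using pd_has_derivative[OF D] pd_has_derivative[OF E] by simp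
qed

lemma pd_sum:
  assumes "finite A" "\<And>a. a \<in> A \<Longrightarrow> \<phi> a differentiable (at y)"
  shows "pd i (\<lambda>y. \<Sum>a\<in>A. \<phi> a y) y = (\<Sum>a\<in>A. pd i (\<phi> a) y)"
proof -
  have "\<forall>a\<in>A. \<exists>D. (\<phi> a has_derivative D) (at y)" using assms(2) differentiable_def by blast
  then obtain D where D: "\<And>a. a \<in> A \<Longrightarrow> (\<phi> a has_derivative D a) (at y)" by metis
  have "((\<lambda>y. \<Sum>a\<in>A. \<phi> a y) has_derivative (\<lambda>v. \<Sum>a\<in>A. D a v)) (at y)"
    using has_derivative_sum[of A \<phi> D] D by blast
  then have "pd i (\<lambda>y. \<Sum>a\<in>A. \<phi> a y) y = (\<Sum>a\<in>A. D a (axis i 1))" by (rule pd_has_derivative)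
  also have "\<dots> = (\<Sum>a\<in>A. pd i (\<phi> a) y)" by (intro sum.cong refl) (simp add: pd_has_derivative[OF D])
  finally show ?thesis .
qed

lemma pd_chain:
  fixes f :: "real^'n \<Rightarrow> real^'m" and F :: "real^'m \<Rightarrow> 'b::real_normed_vector"
  assumes "F differentiable (at (f y))" "f differentiable (at y)"
  shows "pd i (\<lambda>y. F (f y)) y = (\<Sum>c\<in>UNIV. pd i f y $ c *\<^sub>R pd c F (f y))"
proof -
  obtain D where D: "(f has_derivative D) (at y)" using assms differentiable_def by blast
  have "((\<lambda>y. F (f y)) has_derivative (\<lambda>v. \<Sum>c\<in>UNIV. D v $ c *\<^sub>R pd c F (f y))) (at y)"
    using has_derivative_compose[OF D frechet_expand[OF assms(1)]] by (simp add: o_def)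
  then have "pd i (\<lambda>y. F (f y)) y = (\<Sum>c\<in>UNIV. D (axis i 1) $ c *\<^sub>R pd c F (f y))"
    by (rule pd_has_derivative)
  then show ?thesis using pd_has_derivative[OF D] by simp
qed

lemma pd_cong_on:
  assumes "open U" "y \<in> U" "\<And>z. z \<in> U \<Longrightarrow> \<phi> z = \<psi> z"
  shows "pd i \<phi> y = pd i \<psi> y"
proof -
  obtain e where e: "e > 0" "ball y e \<subseteq> U" using assms(1,2) open_contains_ball by blast
  have "eventually (\<lambda>t. y + t *\<^sub>R axis i 1 \<in> U) (nhds 0)"
    unfolding eventually_nhds_metric
  proof (intro exI[of _ e] conjI allI impI)
    fix t :: real assume "dist t 0 < e"
    then have "dist y (y + t *\<^sub>R axis i 1) < e" by (simp add: dist_norm)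
    then show "y + t *\<^sub>R axis i 1 \<in> U" using e by auto
  qed (use e in auto)
  then have "eventually (\<lambda>t. t \<in> UNIV \<longrightarrow> \<phi> (y + t *\<^sub>R axis i 1) = \<psi> (y + t *\<^sub>R axis i 1)) (nhds 0)"
    by (rule eventually_mono) (simp add: assms(3))
  then show ?thesis unfolding pd_def by (rule vector_derivative_cong_eq) simp_all
qed

lemma pd_const_on:
  assumes "open U" "y \<in> U" "\<And>z. z \<in> U \<Longrightarrow> \<phi> z = k"
  shows "pd i \<phi> y = 0"
proof -
  have "pd i \<phi> y = pd i (\<lambda>_. k) y" using pd_cong_on[OF assms] .
  also have "\<dots> = 0" by (rule pd_has_derivative[OF has_derivative_const])
  finally show ?thesis .
qed

lemma line_deriv:
  fixes \<phi> :: "real^'k \<Rightarrow> real"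
  assumes "\<phi> differentiable (at (a + t *\<^sub>R axis i 1))"
  shows "((\<lambda>t. \<phi> (a + t *\<^sub>R axis i 1)) has_real_derivative pd i \<phi> (a + t *\<^sub>R axis i 1)) (at t)"
proof -
  obtain D where D: "(\<phi> has_derivative D) (at (a + t *\<^sub>R axis i 1))"
    using assms differentiable_def by blast
  have l: "linear D" using D has_derivative_linear by blast
  have "((\<lambda>t::real. a + t *\<^sub>R axis i 1) has_derivative (\<lambda>h. h *\<^sub>R axis i 1)) (at t)"
    by (auto intro!: derivative_eq_intros)
  from has_derivative_compose[OF this D]
  have "((\<lambda>t. \<phi> (a + t *\<^sub>R axis i 1)) has_derivative (\<lambda>h. D (h *\<^sub>R axis i 1))) (at t)"
    by (simp add: o_def)
  moreover have "(\<lambda>h. D (h *\<^sub>R axis i 1)) = (\<lambda>h. pd i \<phi> (a + t *\<^sub>R axis i 1) * h)"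
    using linear_scale[OF l] pd_has_derivative[OF D] by (auto simp: mult.commute)
  ultimately show ?thesis unfolding has_field_derivative_def by simp
qed

lemma mixed_mvt:
  fixes \<phi> :: "real^'k \<Rightarrow> real"
  assumes s: "s > 0"
    and sq: "\<And>\<sigma> \<tau>. 0 \<le> \<sigma> \<Longrightarrow> \<sigma> \<le> s \<Longrightarrow> 0 \<le> \<tau> \<Longrightarrow> \<tau> \<le> s \<Longrightarrow> x + \<sigma> *\<^sub>R axis i 1 + \<tau> *\<^sub>R axis j 1 \<in> U"
    and d0: "\<And>y. y \<in> U \<Longrightarrow> \<phi> differentiable (at y)"
    and di: "\<And>y. y \<in> U \<Longrightarrow> pd i \<phi> differentiable (at y)"
  shows "\<exists>\<sigma> \<tau>. 0 < \<sigma> \<and> \<sigma> < s \<and> 0 < \<tau> \<and> \<tau> < s \<and>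
     \<phi> (x + s *\<^sub>R axis i 1 + s *\<^sub>R axis j 1) - \<phi> (x + s *\<^sub>R axis i 1) - \<phi> (x + s *\<^sub>R axis j 1) + \<phi> x
       = s * s * pd j (pd i \<phi>) (x + \<sigma> *\<^sub>R axis i 1 + \<tau> *\<^sub>R axis j 1)"
proof -
  define ei ej where "ei = axis i (1::real)" and "ej = axis j (1::real)"
  define u where "u \<sigma> = \<phi> ((x + s *\<^sub>R ej) + \<sigma> *\<^sub>R ei) - \<phi> (x + \<sigma> *\<^sub>R ei)" for \<sigma>
  have "\<exists>z. 0 < z \<and> z < s \<and> u s - u 0 = (s - 0) *
      (pd i \<phi> ((x + s *\<^sub>R ej) + z *\<^sub>R ei) - pd i \<phi> (x + z *\<^sub>R ei))"
  proof (rule MVT2)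
    fix \<sigma> assume h: "0 \<le> \<sigma>" "\<sigma> \<le> s"
    have m1: "(x + s *\<^sub>R ej) + \<sigma> *\<^sub>R ei \<in> U" using sq[OF h, of s] s
      by (simp add: ei_def ej_def algebra_simps)
    have m2: "x + \<sigma> *\<^sub>R ei \<in> U" using sq[OF h, of 0] s by (simp add: ei_def ej_def)
    show "DERIV u \<sigma> :> pd i \<phi> ((x + s *\<^sub>R ej) + \<sigma> *\<^sub>R ei) - pd i \<phi> (x + \<sigma> *\<^sub>R ei)"
      unfolding u_def ei_def
      by (intro DERIV_diff line_deriv d0) (use m1 m2 in \<open>simp_all add: ei_def\<close>)
  qed (use s in auto)
  then obtain \<sigma> where \<sigma>: "0 < \<sigma>" "\<sigma> < s" and eq1: "u s - u 0 = s *
      (pd i \<phi> ((x + \<sigma> *\<^sub>R ei) + s *\<^sub>R ej) - pd i \<phi> ((x + \<sigma> *\<^sub>R ei) + 0 *\<^sub>R ej))"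
    by (auto simp: algebra_simps)
  define v where "v \<tau> = pd i \<phi> ((x + \<sigma> *\<^sub>R ei) + \<tau> *\<^sub>R ej)" for \<tau>
  have "\<exists>z. 0 < z \<and> z < s \<and> v s - v 0 = (s - 0) * pd j (pd i \<phi>) ((x + \<sigma> *\<^sub>R ei) + z *\<^sub>R ej)"
  proof (rule MVT2)
    fix \<tau> assume h: "0 \<le> \<tau>" "\<tau> \<le> s"
    have m: "(x + \<sigma> *\<^sub>R ei) + \<tau> *\<^sub>R ej \<in> U" using sq[OF _ _ h, of \<sigma>] \<sigma>
      by (simp add: ei_def ej_def)
    show "DERIV v \<tau> :> pd j (pd i \<phi>) ((x + \<sigma> *\<^sub>R ei) + \<tau> *\<^sub>R ej)"
      unfolding v_def ej_def
      by (intro line_deriv di) (use m in \<open>simp add: ej_def\<close>)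
  qed (use s in auto)
  then obtain \<tau> where \<tau>: "0 < \<tau>" "\<tau> < s" and eq2: "v s - v 0 = s * pd j (pd i \<phi>) ((x + \<sigma> *\<^sub>R ei) + \<tau> *\<^sub>R ej)"
    by auto
  have "\<phi> (x + s *\<^sub>R ei + s *\<^sub>R ej) - \<phi> (x + s *\<^sub>R ei) - \<phi> (x + s *\<^sub>R ej) + \<phi> x = u s - u 0"
    by (simp add: u_def algebra_simps)
  also have "\<dots> = s * (v s - v 0)" using eq1 by (simp add: v_def)
  also have "\<dots> = s * s * pd j (pd i \<phi>) (x + \<sigma> *\<^sub>R ei + \<tau> *\<^sub>R ej)" using eq2 by simp
  finally show ?thesis using \<sigma> \<tau> unfolding ei_def ej_def by blast
qed

lemma schwarz:
  fixes \<phi> :: "real^'k \<Rightarrow> real"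
  assumes U: "open U" "x \<in> U"
    and d0: "\<And>y. y \<in> U \<Longrightarrow> \<phi> differentiable (at y)"
    and di: "\<And>y. y \<in> U \<Longrightarrow> pd i \<phi> differentiable (at y)"
    and dj: "\<And>y. y \<in> U \<Longrightarrow> pd j \<phi> differentiable (at y)"
    and ci: "isCont (pd j (pd i \<phi>)) x" and cj: "isCont (pd i (pd j \<phi>)) x"
  shows "pd j (pd i \<phi>) x = pd i (pd j \<phi>) x"
proof (rule ccontr)
  define A B where "A = pd j (pd i \<phi>) x" and "B = pd i (pd j \<phi>) x"
  assume "pd j (pd i \<phi>) x \<noteq> pd i (pd j \<phi>) x"
  then have AB: "A \<noteq> B" by (simp add: A_def B_def)
  define e where "e = \<bar>A - B\<bar> / 3"
  have e: "e > 0" using AB by (simp add: e_def)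
  obtain d1 where d1: "d1 > 0" "\<And>y. dist y x < d1 \<Longrightarrow> dist (pd j (pd i \<phi>) y) A < e"
    using ci e unfolding continuous_at_eps_delta A_def by blast
  obtain d2 where d2: "d2 > 0" "\<And>y. dist y x < d2 \<Longrightarrow> dist (pd i (pd j \<phi>) y) B < e"
    using cj e unfolding continuous_at_eps_delta B_def by blast
  obtain d3 where d3: "d3 > 0" "ball x d3 \<subseteq> U" using U open_contains_ball by blast
  define d where "d = min d1 (min d2 d3)"
  have d: "d > 0" "d \<le> d1" "d \<le> d2" "d \<le> d3" using d1 d2 d3 by (auto simp: d_def)
  define s where "s = d / 3"
  have s: "s > 0" using d by (simp add: s_def)
  have close: "dist (x + \<sigma> *\<^sub>R axis k 1 + \<tau> *\<^sub>R axis l 1) x < d"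
    if "0 \<le> \<sigma>" "\<sigma> \<le> s" "0 \<le> \<tau>" "\<tau> \<le> s" for \<sigma> \<tau> :: real and k l
  proof -
    have "dist (x + \<sigma> *\<^sub>R axis k 1 + \<tau> *\<^sub>R axis l 1) x = norm (\<sigma> *\<^sub>R axis k 1 + \<tau> *\<^sub>R axis l (1::real))"
      by (simp add: dist_norm)
    also have "\<dots> \<le> norm (\<sigma> *\<^sub>R axis k (1::real)) + norm (\<tau> *\<^sub>R axis l (1::real))" by (rule norm_triangle_ineq)
    also have "\<dots> = \<sigma> + \<tau>" using that by simp
    also have "\<dots> < d" using that s_def d by simp
    finally show ?thesis .
  qed
  have inU: "x + \<sigma> *\<^sub>R axis k 1 + \<tau> *\<^sub>R axis l 1 \<in> U"
    if "0 \<le> \<sigma>" "\<sigma> \<le> s" "0 \<le> \<tau>" "\<tau> \<le> s" for \<sigma> \<tau> :: real and k l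
    using close[OF that, of k l] d d3 by (auto simp: dist_commute)
  obtain \<sigma>1 \<tau>1 where st1: "0 < \<sigma>1" "\<sigma>1 < s" "0 < \<tau>1" "\<tau>1 < s" and
    eq1: "\<phi> (x + s *\<^sub>R axis i 1 + s *\<^sub>R axis j 1) - \<phi> (x + s *\<^sub>R axis i 1) - \<phi> (x + s *\<^sub>R axis j 1) + \<phi> x
       = s * s * pd j (pd i \<phi>) (x + \<sigma>1 *\<^sub>R axis i 1 + \<tau>1 *\<^sub>R axis j 1)"
    using mixed_mvt[where i=i and j=j, OF s inU d0 di] by blast
  obtain \<sigma>2 \<tau>2 where st2: "0 < \<sigma>2" "\<sigma>2 < s" "0 < \<tau>2" "\<tau>2 < s" and
    eq2: "\<phi> (x + s *\<^sub>R axis j 1 + s *\<^sub>R axis i 1) - \<phi> (x + s *\<^sub>R axis j 1) - \<phi> (x + s *\<^sub>R axis i 1) + \<phi> x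
       = s * s * pd i (pd j \<phi>) (x + \<sigma>2 *\<^sub>R axis j 1 + \<tau>2 *\<^sub>R axis i 1)"
    using mixed_mvt[where i=j and j=i, OF s inU d0 dj] by blast
  have "s * s * pd j (pd i \<phi>) (x + \<sigma>1 *\<^sub>R axis i 1 + \<tau>1 *\<^sub>R axis j 1)
      = s * s * pd i (pd j \<phi>) (x + \<sigma>2 *\<^sub>R axis j 1 + \<tau>2 *\<^sub>R axis i 1)"
    using eq1 eq2 by (simp add: algebra_simps)
  then have eq: "pd j (pd i \<phi>) (x + \<sigma>1 *\<^sub>R axis i 1 + \<tau>1 *\<^sub>R axis j 1)
      = pd i (pd j \<phi>) (x + \<sigma>2 *\<^sub>R axis j 1 + \<tau>2 *\<^sub>R axis i 1)" using s by simp
  have a: "dist (pd j (pd i \<phi>) (x + \<sigma>1 *\<^sub>R axis i 1 + \<tau>1 *\<^sub>R axis j 1)) A < e"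
    using d1(2) close[of \<sigma>1 \<tau>1 i j] st1 d by force
  have b: "dist (pd i (pd j \<phi>) (x + \<sigma>2 *\<^sub>R axis j 1 + \<tau>2 *\<^sub>R axis i 1)) B < e"
    using d2(2) close[of \<sigma>2 \<tau>2 j i] st2 d by force
  from a b eq have "\<bar>A - B\<bar> < 2 * e" by (simp add: dist_real_def)
  then show False using e by (simp add: e_def)
qed

lemma differentiable_nth:
  "F differentiable (at y) \<Longrightarrow> (\<lambda>y. F y $ a) differentiable (at y)"
  unfolding differentiable_def using bounded_linear.has_derivative[OF bounded_linear_vec_nth] by blast

lemma gi_inner: "g_inner g p u v = inner u (g p *v v)"
  by (simp add: g_inner_def inner_vec_def matrix_vector_mult_def sum_distrib_left mult_ac)

lemma lower_mv: "lower g p u = g p *v u"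
  by (simp add: lower_def matrix_vector_mult_def)

lemma sum_lower: "(\<Sum>a\<in>UNIV. v $ a * lower g p u $ a) = g_inner g p v u"
  by (simp add: gi_inner lower_mv inner_vec_def)

locale ambient =
  fixes V :: "(real^'m::finite) set" and g :: "real^'m \<Rightarrow> real^'m^'m"
    and W :: "real^'m \<Rightarrow> real^'m" and p :: "real^'m"
  assumes metric: "riemannian_metric_on V g" and killing: "killing_on V g W" and pV: "p \<in> V"
begin

abbreviation "G \<equiv> g p"
abbreviation gi where "gi \<equiv> g_inner g p"

lemma openV: "open V" using metric by (simp add: riemannian_metric_on_def)

lemma gsym: "q \<in> V \<Longrightarrow> g q $ a $ b = g q $ b $ a"
  using metric by (simp add: riemannian_metric_on_def)

lemma Gsym: "G $ a $ b = G $ b $ a" using gsym pV by blast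

lemma gpos: "u \<noteq> 0 \<Longrightarrow> gi u u > 0"
  using metric pV by (simp add: riemannian_metric_on_def)

lemma gi_sym: "gi u v = gi v u"
  unfolding g_inner_def by (subst sum.swap) (simp add: Gsym mult_ac)

lemma gi_add_left: "gi (u + v) w = gi u w + gi v w" by (simp add: gi_inner inner_add_left)
lemma gi_add_right: "gi w (u + v) = gi w u + gi w v"
  by (simp add: gi_inner inner_add_right matrix_vector_right_distrib)
lemma gi_scale_left: "gi (c *\<^sub>R u) w = c * gi u w" by (simp add: gi_inner)
lemma gi_scale_right: "gi w (c *\<^sub>R u) = c * gi w u"
  by (simp add: gi_inner matrix_vector_mult_scaleR)
lemma gi_diff_left: "gi (u - v) w = gi u w - gi v w" by (simp add: gi_inner inner_diff_left)
lemma gi_diff_right: "gi w (u - v) = gi w u - gi w v"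
  by (simp add: gi_inner inner_diff_right matrix_vector_mult_diff_distrib)
lemma gi_sum_left: "gi (\<Sum>k\<in>A. u k) w = (\<Sum>k\<in>A. gi (u k) w)"
  by (simp add: gi_inner inner_sum_left)
lemma gi_sum_right: "gi w (\<Sum>k\<in>A. u k) = (\<Sum>k\<in>A. gi w (u k))"
proof -
  have "G *v (\<Sum>k\<in>A. u k) = (\<Sum>k\<in>A. G *v u k)"
    using linear_sum[OF matrix_vector_mul_linear[of G]] by simp
  then show ?thesis by (simp add: gi_inner inner_sum_right)
qed
lemma gi_zero_left[simp]: "gi 0 w = 0" and gi_zero_right[simp]: "gi w 0 = 0"
  by (simp_all add: gi_inner)

lemmas gi_lin = gi_add_left gi_add_right gi_scale_left gi_scale_right gi_diff_left gi_diff_right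
  gi_sum_left gi_sum_right

lemma G_invertible: "invertible G"
proof -
  have "inj ((*v) G)"
  proof (rule injI)
    fix u v assume "G *v u = G *v v"
    then have "G *v (u - v) = 0" by (simp add: matrix_vector_mult_diff_distrib)
    then have "gi (u - v) (u - v) = 0" by (simp add: gi_inner)
    then show "u = v" using gpos[of "u - v"] by (cases "u = v") auto
  qed
  then show ?thesis using matrix_left_invertible_injective invertible_left_inverse by blast
qed

definition "Ginv = matrix_inv G"

lemma G_Ginv: "G ** Ginv = mat 1"
  using G_invertible someI_ex[of "\<lambda>A'. G ** A' = mat 1 \<and> A' ** G = mat 1"]
  unfolding Ginv_def matrix_inv_def invertible_def by blast

lemma gdiff: "q \<in> V \<Longrightarrow> g differentiable (at q)"
  using metric unfolding riemannian_metric_on_def Csmooth_on_def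
  by (metis iter_pd.simps(1) differentiable_on_eq_differentiable_at)

lemma Wdiff: "q \<in> V \<Longrightarrow> W differentiable (at q)"
  using killing metric unfolding killing_on_def riemannian_metric_on_def Csmooth_on_def
  by (metis iter_pd.simps(1) differentiable_on_eq_differentiable_at)

lemma gcdiff: "q \<in> V \<Longrightarrow> (\<lambda>q. g q $ a $ b) differentiable (at q)"
  using differentiable_nth[OF differentiable_nth[OF gdiff]] .

lemma Wcdiff: "q \<in> V \<Longrightarrow> (\<lambda>q. W q $ a) differentiable (at q)"
  using differentiable_nth[OF Wdiff] .

definition "dg c a b = pd c (\<lambda>q. g q $ a $ b) p"
definition "dW c b = pd c (\<lambda>q. W q $ b) p"

lemma dg_sym: "dg c a b = dg c b a"
  unfolding dg_def by (rule pd_cong_on[OF openV pV]) (simp add: gsym)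

lemma christoffel_low:
  "(\<Sum>c\<in>UNIV. G $ a $ c * christoffel g p c b d) = (dg b a d + dg d a b - dg a b d) / 2"
proof -
  define T where "T e = dg b e d + dg d e b - dg e b d" for e
  have ch: "christoffel g p c b d = (1/2) * (\<Sum>e\<in>UNIV. Ginv $ c $ e * T e)" for c
    by (simp add: christoffel_def T_def dg_def Ginv_def)
  have "(\<Sum>c\<in>UNIV. G $ a $ c * christoffel g p c b d)
      = (1/2) * (\<Sum>c\<in>UNIV. \<Sum>e\<in>UNIV. G $ a $ c * Ginv $ c $ e * T e)"
    by (simp add: ch sum_distrib_left mult_ac)
  also have "\<dots> = (1/2) * (\<Sum>e\<in>UNIV. (\<Sum>c\<in>UNIV. G $ a $ c * Ginv $ c $ e) * T e)"
    by (subst sum.swap) (simp add: sum_distrib_right)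
  also have "\<dots> = (1/2) * (\<Sum>e\<in>UNIV. (mat 1 :: real^'m^'m) $ a $ e * T e)"
  proof -
    have "(\<Sum>c\<in>UNIV. G $ a $ c * Ginv $ c $ e) = (G ** Ginv) $ a $ e" for e
      by (simp add: matrix_matrix_mult_def)
    then show ?thesis using G_Ginv by simp
  qed
  also have "\<dots> = (1/2) * (\<Sum>e\<in>UNIV. if a = e then T e else 0)"
    by (intro arg_cong[where f="\<lambda>x. (1/2) * x"] sum.cong) (auto simp: mat_def)
  also have "\<dots> = T a / 2" by simp
  finally show ?thesis by (simp add: T_def)
qed

end

context ambient begin

definition "Col e = (\<chi> b. cov_deriv g W p b e)"

lemma cov_eq: "cov_deriv g W p b e = dW e b + (\<Sum>c\<in>UNIV. christoffel g p b e c * W p $ c)"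
  by (simp add: cov_deriv_def dW_def)

lemma covd_Col: "covd_along g W p u = (\<Sum>e\<in>UNIV. u $ e *\<^sub>R Col e)"
  by (simp add: vec_eq_iff covd_along_def Col_def sum_component)

lemma gi_alt: "gi X v = (\<Sum>b\<in>UNIV. v $ b * (G *v X) $ b)"
  by (subst gi_sym) (simp add: gi_inner inner_vec_def)

lemma GCol: "(G *v Col e) $ a = (\<Sum>c\<in>UNIV. G $ a $ c * dW e c)
   + (\<Sum>d\<in>UNIV. W p $ d * ((dg e a d + dg d a e - dg a e d) / 2))"
proof -
  have "(G *v Col e) $ a = (\<Sum>c\<in>UNIV. G $ a $ c * dW e c)
     + (\<Sum>c\<in>UNIV. \<Sum>d\<in>UNIV. W p $ d * (G $ a $ c * christoffel g p c e d))"
    by (simp add: matrix_vector_mult_def Col_def cov_eq distrib_left sum.distrib sum_distrib_left mult_ac)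
  also have "(\<Sum>c\<in>UNIV. \<Sum>d\<in>UNIV. W p $ d * (G $ a $ c * christoffel g p c e d))
      = (\<Sum>d\<in>UNIV. W p $ d * (\<Sum>c\<in>UNIV. G $ a $ c * christoffel g p c e d))"
    by (subst sum.swap) (simp add: sum_distrib_left)
  finally show ?thesis by (simp add: christoffel_low)
qed

lemma kill_comp: "(G *v Col b) $ a + (G *v Col a) $ b = 0"
proof -
  have K: "(\<Sum>c\<in>UNIV. W p $ c * dg c a b) + (\<Sum>c\<in>UNIV. G $ c $ b * dW a c)
      + (\<Sum>c\<in>UNIV. G $ a $ c * dW b c) = 0"
    using killing pV unfolding killing_on_def dg_def dW_def by blast
  have s: "(\<Sum>d\<in>UNIV. W p $ d * ((dg b a d + dg d a b - dg a b d) / 2))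
     + (\<Sum>d\<in>UNIV. W p $ d * ((dg a b d + dg d b a - dg b a d) / 2))
     = (\<Sum>d\<in>UNIV. W p $ d * dg d a b)"
    unfolding sum.distrib[symmetric] by (rule sum.cong) (auto simp: dg_sym[of _ b a] field_simps)
  have t: "(\<Sum>c\<in>UNIV. G $ c $ b * dW a c) = (\<Sum>c\<in>UNIV. G $ b $ c * dW a c)"
    by (simp add: Gsym)
  show ?thesis using K s t by (simp add: GCol)
qed

lemma killing_antisym:
  "gi (covd_along g W p u) v + gi (covd_along g W p v) u = 0"
proof -
  have e: "gi (covd_along g W p u) v = (\<Sum>e\<in>UNIV. \<Sum>b\<in>UNIV. u $ e * v $ b * (G *v Col e) $ b)"
    for u v
    by (simp only: covd_Col gi_sum_left gi_scale_left) (simp add: gi_alt sum_distrib_left mult_ac)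
  have "gi (covd_along g W p v) u = (\<Sum>e\<in>UNIV. \<Sum>b\<in>UNIV. v $ e * u $ b * (G *v Col e) $ b)"
    by (rule e)
  also have "\<dots> = (\<Sum>e\<in>UNIV. \<Sum>b\<in>UNIV. u $ e * v $ b * (G *v Col b) $ e)"
    by (subst sum.swap) (simp add: mult_ac)
  finally have e2: "gi (covd_along g W p v) u = \<dots>" .
  have "gi (covd_along g W p u) v + gi (covd_along g W p v) u
      = (\<Sum>e\<in>UNIV. \<Sum>b\<in>UNIV. u $ e * v $ b * ((G *v Col e) $ b + (G *v Col b) $ e))"
    by (simp only: e[of u v] e2) (simp add: sum.distrib[symmetric] distrib_left)
  also have "\<dots> = 0" by (simp add: kill_comp)
  finally show ?thesis .
qed

lemma normsq_eq: "normsq g W = (\<lambda>q. \<Sum>b\<in>UNIV. \<Sum>c\<in>UNIV. g q $ b $ c * W q $ b * W q $ c)"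
  by (simp add: fun_eq_iff normsq_def g_inner_def)

lemma metric_compat: "pd a (normsq g W) p = 2 * gi (Col a) (W p)"
proof -
  note dfs = gcdiff[OF pV] Wcdiff[OF pV]
  have "pd a (normsq g W) p = (\<Sum>b\<in>UNIV. \<Sum>c\<in>UNIV. pd a (\<lambda>q. g q $ b $ c * W q $ b * W q $ c) p)"
    unfolding normsq_eq
    by (simp add: pd_sum dfs)
  also have "\<dots> = (\<Sum>b\<in>UNIV. \<Sum>c\<in>UNIV. dg a b c * W p $ b * W p $ c + G $ b $ c * dW a b * W p $ c
       + G $ b $ c * W p $ b * dW a c)"
    by (simp add: pd_mult dfs dg_def dW_def algebra_simps)
  also have "\<dots> = (\<Sum>b\<in>UNIV. \<Sum>c\<in>UNIV. dg a b c * W p $ b * W p $ c)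
      + (\<Sum>b\<in>UNIV. \<Sum>c\<in>UNIV. G $ b $ c * dW a b * W p $ c)
      + (\<Sum>b\<in>UNIV. \<Sum>c\<in>UNIV. G $ b $ c * W p $ b * dW a c)"
    by (simp add: sum.distrib)
  also have "(\<Sum>b\<in>UNIV. \<Sum>c\<in>UNIV. G $ b $ c * dW a b * W p $ c)
      = (\<Sum>b\<in>UNIV. \<Sum>c\<in>UNIV. G $ b $ c * W p $ b * dW a c)"
    by (subst sum.swap) (simp add: Gsym mult_ac)
  finally have L: "pd a (normsq g W) p = (\<Sum>b\<in>UNIV. \<Sum>c\<in>UNIV. dg a b c * W p $ b * W p $ c)
      + 2 * (\<Sum>b\<in>UNIV. \<Sum>c\<in>UNIV. G $ b $ c * W p $ b * dW a c)" by simp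
  have "gi (Col a) (W p) = (\<Sum>b\<in>UNIV. \<Sum>c\<in>UNIV. G $ b $ c * W p $ b * dW a c)
     + (\<Sum>b\<in>UNIV. \<Sum>d\<in>UNIV. W p $ b * W p $ d * ((dg a b d + dg d b a - dg b a d) / 2))"
    by (simp add: gi_alt GCol distrib_left sum.distrib sum_distrib_left mult_ac)
  also have "(\<Sum>b\<in>UNIV. \<Sum>d\<in>UNIV. W p $ b * W p $ d * ((dg a b d + dg d b a - dg b a d) / 2))
     = (\<Sum>b\<in>UNIV. \<Sum>d\<in>UNIV. W p $ b * W p $ d * dg a b d) / 2
       + (\<Sum>b\<in>UNIV. \<Sum>d\<in>UNIV. W p $ b * W p $ d * dg d b a) / 2
       - (\<Sum>b\<in>UNIV. \<Sum>d\<in>UNIV. W p $ b * W p $ d * dg b a d) / 2"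
  proof -
    have "(\<Sum>b\<in>UNIV. \<Sum>d\<in>UNIV. W p $ b * W p $ d * ((dg a b d + dg d b a - dg b a d) / 2))
      = (\<Sum>b\<in>UNIV. \<Sum>d\<in>UNIV. W p $ b * W p $ d * dg a b d / 2
          + W p $ b * W p $ d * dg d b a / 2 - W p $ b * W p $ d * dg b a d / 2)"
      by (intro sum.cong refl) (simp add: field_simps)
    then show ?thesis by (simp only: sum.distrib sum_subtractf sum_divide_distrib)
  qed
  also have "(\<Sum>b\<in>UNIV. \<Sum>d\<in>UNIV. W p $ b * W p $ d * dg d b a)
       = (\<Sum>b\<in>UNIV. \<Sum>d\<in>UNIV. W p $ b * W p $ d * dg b a d)"
    by (subst sum.swap) (simp add: dg_sym[of _ _ a] mult_ac)
  finally have R: "gi (Col a) (W p) = (\<Sum>b\<in>UNIV. \<Sum>c\<in>UNIV. G $ b $ c * W p $ b * dW a c)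
     + (\<Sum>b\<in>UNIV. \<Sum>d\<in>UNIV. W p $ b * W p $ d * dg a b d) / 2" by simp
  show ?thesis using L R by (simp add: mult_ac)
qed

lemma covd_linear: "covd_along g W p (\<Sum>k\<in>A. c k *\<^sub>R u k) = (\<Sum>k\<in>A. c k *\<^sub>R covd_along g W p (u k))"
  by (simp add: vec_eq_iff covd_along_def sum_component sum_distrib_left sum_distrib_right
     mult_ac sum.swap[of _ A])

lemma covd_add: "covd_along g W p (u + v) = covd_along g W p u + covd_along g W p v"
  and covd_scale: "covd_along g W p (c *\<^sub>R u) = c *\<^sub>R covd_along g W p u"
  and covd_diff: "covd_along g W p (u - v) = covd_along g W p u - covd_along g W p v"
  by (simp_all add: vec_eq_iff covd_along_def sum_distrib_left algebra_simps sum.distrib sum_subtractf)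

lemma dirderiv_normsq: "dirderiv (normsq g W) p u = 2 * gi (covd_along g W p u) (W p)"
  by (simp add: dirderiv_def metric_compat covd_Col gi_sum_left gi_scale_left sum_distrib_left mult_ac)

end

lemma sum_axis_scale: "(\<Sum>k\<in>UNIV. axis i (1::real) $ k *\<^sub>R (z::'k::finite \<Rightarrow> real^'m::finite) k) = z i"
proof -
  have "(\<Sum>k\<in>UNIV. axis i (1::real) $ k *\<^sub>R z k) = (\<Sum>k\<in>UNIV. if k = i then z k else 0)"
    by (rule sum.cong) (auto simp: axis_def)
  then show ?thesis by simp
qed

locale hyper = ambient V g W "f x"
  for V :: "(real^'m::finite) set" and g W and f :: "real^'n::finite \<Rightarrow> real^'m" and x +
  fixes U N
  assumes dim: "CARD('m) = CARD('n) + 1"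
    and imm: "immersion_on U f" and fUV: "f ` U \<subseteq> V"
    and normal: "unit_normal_on U g f N" and xU: "x \<in> U"
begin

abbreviation "z \<equiv> zf f x"
abbreviation "Nx \<equiv> N x"
abbreviation "hm \<equiv> induced_metric g f x"
abbreviation "hi \<equiv> hinv g f x"

lemma openU: "open U" using imm by (simp add: immersion_on_def)

lemma indep: "(\<Sum>i\<in>UNIV. v $ i *\<^sub>R z i) = 0 \<Longrightarrow> v = 0"
  using imm xU by (simp add: immersion_on_def)

lemma NN: "gi Nx Nx = 1" and Nz: "gi Nx (z i) = 0"
  using normal xU by (simp_all add: unit_normal_on_def)

lemma zN: "gi (z i) Nx = 0" using Nz gi_sym by metis

lemma hm_eq: "hm $ i $ j = gi (z i) (z j)"
  by (simp add: induced_metric_def g_inner_def)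

lemma hm_sym: "hm $ i $ j = hm $ j $ i" by (simp add: hm_eq gi_sym)

lemma gi_comb: "gi (\<Sum>i\<in>UNIV. a $ i *\<^sub>R z i) (\<Sum>j\<in>UNIV. b $ j *\<^sub>R z j) = a \<bullet> (hm *v b)"
  by (simp add: gi_sum_left gi_sum_right gi_scale_left gi_scale_right inner_vec_def
      matrix_vector_mult_def hm_eq sum_distrib_left mult_ac, subst sum.swap, simp)

lemma hm_invertible: "invertible hm"
proof -
  have "inj ((*v) hm)"
  proof (rule injI)
    fix u v assume "hm *v u = hm *v v"
    then have "hm *v (u - v) = 0" by (simp add: matrix_vector_mult_diff_distrib)
    then have "gi (\<Sum>i\<in>UNIV. (u - v) $ i *\<^sub>R z i) (\<Sum>i\<in>UNIV. (u - v) $ i *\<^sub>R z i) = 0"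
      by (simp only: gi_comb) simp
    then have "(\<Sum>i\<in>UNIV. (u - v) $ i *\<^sub>R z i) = 0" using gpos by force
    then have "u - v = 0" using indep[of "u - v"] by simp
    then show "u = v" by simp
  qed
  then show ?thesis using matrix_left_invertible_injective invertible_left_inverse by blast
qed

lemma hm_hi: "hm ** hi = mat 1" and hi_hm: "hi ** hm = mat 1"
  using hm_invertible someI_ex[of "\<lambda>A'. hm ** A' = mat 1 \<and> A' ** hm = mat 1"]
  unfolding hinv_def matrix_inv_def invertible_def by blast+

lemma hi_sym: "hi $ i $ j = hi $ j $ i"
proof -
  have th: "transpose hm = hm" by (simp add: transpose_def vec_eq_iff hm_sym)
  have "transpose hi ** hm = mat 1"
    using arg_cong[OF hm_hi, of transpose] by (simp add: matrix_transpose_mul th)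
  then have "transpose hi = transpose hi ** (hm ** hi)" using hm_hi by simp
  also have "\<dots> = hi" using \<open>transpose hi ** hm = mat 1\<close> by (simp add: matrix_mul_assoc)
  finally have "transpose hi = hi" .
  then have "transpose hi $ j $ i = hi $ j $ i" by simp
  then show ?thesis by (simp add: transpose_def)
qed

lemma z_inj: "inj z"
proof (rule injI)
  fix i j assume "z i = z j"
  then have "(\<Sum>k\<in>UNIV. (axis i 1 - axis j (1::real)) $ k *\<^sub>R z k) = 0"
    by (simp add: scaleR_diff_left sum_subtractf sum_axis_scale)
  then have "axis i 1 - axis j (1::real) = 0" by (rule indep)
  then show "i = j" by (simp add: axis_eq_axis)
qed

lemma N_notin: "Nx \<notin> range z"
proof
  assume "Nx \<in> range z"
  then obtain i where "Nx = z i" by auto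
  then have "gi Nx Nx = 0" using Nz[of i] by simp
  then show False using NN by simp
qed

lemma span_all: "\<exists>a b. v = (\<Sum>i\<in>UNIV. a $ i *\<^sub>R z i) + b *\<^sub>R Nx"
proof -
  define B where "B = insert Nx (range z)"
  have fin: "finite B" by (simp add: B_def)
  have sumB: "(\<Sum>w\<in>B. u w *\<^sub>R w) = u Nx *\<^sub>R Nx + (\<Sum>i\<in>UNIV. u (z i) *\<^sub>R z i)" for u
    using N_notin z_inj by (simp add: B_def sum.reindex)
  have ind: "independent B"
  proof
    assume "dependent B"
    then obtain u where u: "\<exists>v\<in>B. u v \<noteq> 0" "(\<Sum>v\<in>B. u v *\<^sub>R v) = 0"
      using dependent_finite[OF fin] by blast
    have s0: "u Nx *\<^sub>R Nx + (\<Sum>i\<in>UNIV. u (z i) *\<^sub>R z i) = 0" using u(2) sumB by simp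
    have "gi Nx (u Nx *\<^sub>R Nx + (\<Sum>i\<in>UNIV. u (z i) *\<^sub>R z i)) = u Nx"
      by (simp add: gi_add_right gi_scale_right gi_sum_right NN Nz)
    then have uN: "u Nx = 0" using s0 by simp
    then have "(\<Sum>i\<in>UNIV. (\<chi> k. u (z k)) $ i *\<^sub>R z i) = 0" using s0 by simp
    then have "(\<chi> k. u (z k)) = 0" by (rule indep)
    then have "\<forall>i. u (z i) = 0" by (simp add: vec_eq_iff)
    with uN u(1) show False by (auto simp: B_def)
  qed
  have card: "card B = CARD('n) + 1"
    using N_notin z_inj by (simp add: B_def card_image)
  have "UNIV \<subseteq> span B"
    by (rule card_ge_dim_independent) (use ind card dim in auto)
  then have "v \<in> span B" by blast
  then obtain u where "v = (\<Sum>w\<in>B. u w *\<^sub>R w)" using span_finite[OF fin] by blast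
  then have "v = (\<Sum>i\<in>UNIV. (\<chi> k. u (z k)) $ i *\<^sub>R z i) + u Nx *\<^sub>R Nx" using sumB by simp
  then show ?thesis by blast
qed

definition "cf v = (\<chi> j. \<Sum>i\<in>UNIV. hi $ i $ j * gi (z i) v)"
definition "Proj v = (\<Sum>j\<in>UNIV. cf v $ j *\<^sub>R z j)"

lemma decomp: "v = Proj v + gi Nx v *\<^sub>R Nx"
proof -
  obtain a b where v: "v = (\<Sum>i\<in>UNIV. a $ i *\<^sub>R z i) + b *\<^sub>R Nx" using span_all by blast
  have gz: "gi (z i) v = (hm *v a) $ i" for i
    by (simp add: v gi_add_right gi_scale_right gi_sum_right zN matrix_vector_mult_def hm_eq mult_ac)
  have gN: "gi Nx v = b"
    by (simp add: v gi_add_right gi_scale_right gi_sum_right NN Nz)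
  have "cf v = hi *v (hm *v a)"
    by (simp add: cf_def gz vec_eq_iff matrix_vector_mult_def hi_sym)
  also have "\<dots> = a" by (simp add: matrix_vector_mul_assoc hi_hm)
  finally have "Proj v = (\<Sum>i\<in>UNIV. a $ i *\<^sub>R z i)" by (simp add: Proj_def)
  then show ?thesis using v gN by simp
qed

lemma gi_Proj_N: "gi (Proj v) Nx = 0"
  by (simp add: Proj_def gi_sum_left gi_scale_left zN)

end

lemma sum_swap23: "(\<Sum>a\<in>A. \<Sum>b\<in>B. \<Sum>c\<in>C. F a b c) = (\<Sum>a\<in>A. \<Sum>c\<in>C. \<Sum>b\<in>B. F a b c)"
  by (rule sum.cong[OF refl]) (rule sum.swap)

context ambient begin

definition "Dg u v w = (\<Sum>c\<in>UNIV. \<Sum>a\<in>UNIV. \<Sum>b\<in>UNIV. u $ c * v $ a * w $ b * dg c a b)"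
definition "Gam u v = (\<chi> a. \<Sum>t\<in>UNIV. \<Sum>d\<in>UNIV. christoffel g p a t d * u $ t * v $ d)"

lemma Dg_sym: "Dg u v w = Dg u w v"
  unfolding Dg_def by (subst sum_swap23) (simp add: dg_sym[of _ _ _] mult_ac)

lemma Dg_sum1: "Dg (\<Sum>k\<in>A. c k *\<^sub>R u k) v w = (\<Sum>k\<in>A. c k * Dg (u k) v w)"
  by (simp add: Dg_def sum_component sum_distrib_left sum_distrib_right mult_ac sum.swap[of _ A])
lemma Dg_sum2: "Dg v (\<Sum>k\<in>A. c k *\<^sub>R u k) w = (\<Sum>k\<in>A. c k * Dg v (u k) w)"
  by (simp add: Dg_def sum_component sum_distrib_left sum_distrib_right mult_ac sum.swap[of _ A])
lemma Dg_sum3: "Dg v w (\<Sum>k\<in>A. c k *\<^sub>R u k) = (\<Sum>k\<in>A. c k * Dg v w (u k))"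
  by (simp add: Dg_def sum_component sum_distrib_left sum_distrib_right mult_ac sum.swap[of _ A])
lemma Dg_add1: "Dg (u + u') v w = Dg u v w + Dg u' v w"
  and Dg_add2: "Dg v (u + u') w = Dg v u w + Dg v u' w"
  and Dg_add3: "Dg v w (u + u') = Dg v w u + Dg v w u'"
  and Dg_scale1: "Dg (r *\<^sub>R u) v w = r * Dg u v w"
  and Dg_scale2: "Dg v (r *\<^sub>R u) w = r * Dg v u w"
  and Dg_scale3: "Dg v w (r *\<^sub>R u) = r * Dg v w u"
  by (simp_all add: Dg_def algebra_simps sum.distrib sum_distrib_left)

lemmas Dg_lin = Dg_sum1 Dg_sum2 Dg_sum3 Dg_add1 Dg_add2 Dg_add3 Dg_scale1 Dg_scale2 Dg_scale3

lemma GGam: "(G *v Gam u v) $ b = (\<Sum>t\<in>UNIV. \<Sum>d\<in>UNIV. u $ t * v $ d * ((dg t b d + dg d b t - dg b t d) / 2))"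
proof -
  have "(G *v Gam u v) $ b = (\<Sum>a\<in>UNIV. \<Sum>t\<in>UNIV. \<Sum>d\<in>UNIV. u $ t * v $ d * (G $ b $ a * christoffel g p a t d))"
    by (simp add: matrix_vector_mult_def Gam_def sum_distrib_left mult_ac)
  also have "\<dots> = (\<Sum>t\<in>UNIV. \<Sum>d\<in>UNIV. \<Sum>a\<in>UNIV. u $ t * v $ d * (G $ b $ a * christoffel g p a t d))"
    by (subst sum.swap) (subst sum_swap23, rule refl)
  also have "\<dots> = (\<Sum>t\<in>UNIV. \<Sum>d\<in>UNIV. u $ t * v $ d * (\<Sum>a\<in>UNIV. G $ b $ a * christoffel g p a t d))"
    by (simp add: sum_distrib_left)
  finally show ?thesis by (simp add: christoffel_low)
qed

lemma gi_Gam: "gi (Gam u v) y = (Dg u y v + Dg v y u - Dg y u v) / 2"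
proof -
  define F where "F b t d = y $ b * u $ t * v $ d" for b t d
  have L: "gi (Gam u v) y = (\<Sum>b\<in>UNIV. \<Sum>t\<in>UNIV. \<Sum>d\<in>UNIV. F b t d * ((dg t b d + dg d b t - dg b t d) / 2))"
    by (simp add: gi_alt GGam F_def sum_distrib_left mult_ac)
  have D1: "Dg u y v = (\<Sum>b\<in>UNIV. \<Sum>t\<in>UNIV. \<Sum>d\<in>UNIV. F b t d * dg t b d)"
  proof -
    have "Dg u y v = (\<Sum>t\<in>UNIV. \<Sum>b\<in>UNIV. \<Sum>d\<in>UNIV. F b t d * dg t b d)"
      by (simp add: Dg_def F_def mult_ac)
    also have "\<dots> = (\<Sum>b\<in>UNIV. \<Sum>t\<in>UNIV. \<Sum>d\<in>UNIV. F b t d * dg t b d)"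
      by (rule sum.swap)
    finally show ?thesis .
  qed
  have D2: "Dg v y u = (\<Sum>b\<in>UNIV. \<Sum>t\<in>UNIV. \<Sum>d\<in>UNIV. F b t d * dg d b t)"
  proof -
    have "Dg v y u = (\<Sum>d\<in>UNIV. \<Sum>b\<in>UNIV. \<Sum>t\<in>UNIV. F b t d * dg d b t)"
      by (simp add: Dg_def F_def mult_ac)
    also have "\<dots> = (\<Sum>b\<in>UNIV. \<Sum>d\<in>UNIV. \<Sum>t\<in>UNIV. F b t d * dg d b t)"
      by (rule sum.swap)
    also have "\<dots> = (\<Sum>b\<in>UNIV. \<Sum>t\<in>UNIV. \<Sum>d\<in>UNIV. F b t d * dg d b t)"
      by (rule sum_swap23)
    finally show ?thesis .
  qed
  have D3: "Dg y u v = (\<Sum>b\<in>UNIV. \<Sum>t\<in>UNIV. \<Sum>d\<in>UNIV. F b t d * dg b t d)"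
    by (simp add: Dg_def F_def mult_ac)
  have "(Dg u y v + Dg v y u - Dg y u v) / 2 = Dg u y v / 2 + Dg v y u / 2 - Dg y u v / 2"
    by (simp add: add_divide_distrib diff_divide_distrib)
  also have "\<dots>
     = (\<Sum>b\<in>UNIV. \<Sum>t\<in>UNIV. \<Sum>d\<in>UNIV. F b t d * dg t b d / 2 + F b t d * dg d b t / 2 - F b t d * dg b t d / 2)"
    by (simp only: D1 D2 D3 sum.distrib sum_subtractf sum_divide_distrib)
  also have "\<dots> = (\<Sum>b\<in>UNIV. \<Sum>t\<in>UNIV. \<Sum>d\<in>UNIV. F b t d * ((dg t b d + dg d b t - dg b t d) / 2))"
    by (intro sum.cong refl) (simp add: field_simps)
  finally show ?thesis using L by simp
qed

end

lemma diff_transform: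
  assumes "F differentiable (at y)" "open U" "y \<in> U" "\<And>q. q \<in> U \<Longrightarrow> F q = H q"
  shows "H differentiable (at y)"
  using assms has_derivative_transform_within_open unfolding differentiable_def by blast

context ambient begin
lemma Dg_alt: "Dg u v w = (\<Sum>a\<in>UNIV. \<Sum>b\<in>UNIV. (\<Sum>c\<in>UNIV. u $ c * dg c a b) * v $ a * w $ b)"
proof -
  have "Dg u v w = (\<Sum>a\<in>UNIV. \<Sum>c\<in>UNIV. \<Sum>b\<in>UNIV. u $ c * v $ a * w $ b * dg c a b)"
    unfolding Dg_def by (rule sum.swap)
  also have "\<dots> = (\<Sum>a\<in>UNIV. \<Sum>b\<in>UNIV. \<Sum>c\<in>UNIV. u $ c * v $ a * w $ b * dg c a b)"
    by (rule sum_swap23)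
  finally show ?thesis by (simp add: sum_distrib_left sum_distrib_right mult_ac)
qed
end

context hyper begin

lemma fyV: "y \<in> U \<Longrightarrow> f y \<in> V" using fUV by blast
lemma pV': "f x \<in> V" using fyV xU .

lemma smooth_f: "Csmooth_on U f" using imm by (simp add: immersion_on_def)

lemma fdiff: "y \<in> U \<Longrightarrow> f differentiable (at y)"
  using smooth_f openU unfolding Csmooth_on_def
  by (metis iter_pd.simps(1) differentiable_on_eq_differentiable_at)

lemma zdiff: "y \<in> U \<Longrightarrow> pd j f differentiable (at y)"
proof -
  assume y: "y \<in> U"
  have "iter_pd [j] f differentiable_on U" using smooth_f unfolding Csmooth_on_def by blast
  then show ?thesis using y openU by (simp add: differentiable_on_eq_differentiable_at)
qed

lemma zzdiff: "y \<in> U \<Longrightarrow> pd i (pd j f) differentiable (at y)"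
proof -
  assume y: "y \<in> U"
  have "iter_pd [i, j] f differentiable_on U" using smooth_f unfolding Csmooth_on_def by blast
  then show ?thesis using y openU by (simp add: differentiable_on_eq_differentiable_at)
qed

lemma Ndiff: "y \<in> U \<Longrightarrow> N differentiable (at y)"
  using normal openU unfolding unit_normal_on_def Csmooth_on_def
  by (metis iter_pd.simps(1) differentiable_on_eq_differentiable_at)

lemma gfdiff: "y \<in> U \<Longrightarrow> (\<lambda>y. g (f y) $ a $ b) differentiable (at y)"
  using differentiable_compose[OF gcdiff[OF fyV] fdiff] by blast

lemma Wfdiff: "y \<in> U \<Longrightarrow> (\<lambda>y. W (f y)) differentiable (at y)"
  using differentiable_compose[OF Wdiff[OF fyV] fdiff] by blast

lemma pd_gf: "pd i (\<lambda>y. g (f y) $ a $ b) x = (\<Sum>c\<in>UNIV. z i $ c * dg c a b)"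
  using pd_chain[OF gcdiff[OF pV'] fdiff[OF xU], of i] by (simp add: dg_def)

definition "S i j = pd i (\<lambda>y. zf f y j) x"

lemma S_comp: "pd i (\<lambda>y. zf f y j $ a) x = S i j $ a"
  unfolding S_def by (rule pd_nth[OF zdiff[OF xU]])

lemma S_sym: "S i j = S j i"
proof -
  have "S i j $ a = S j i $ a" for a
  proof -
    define \<phi> where "\<phi> y = f y $ a" for y
    have zp: "zf f y k $ a = pd k \<phi> y" if "y \<in> U" for y k
      unfolding \<phi>_def using pd_nth[OF fdiff[OF that]] by simp
    have e1: "S i j $ a = pd i (pd j \<phi>) x"
      unfolding S_comp[symmetric] by (rule pd_cong_on[OF openU xU]) (simp add: zp)
    have e2: "S j i $ a = pd j (pd i \<phi>) x"
      unfolding S_comp[symmetric] by (rule pd_cong_on[OF openU xU]) (simp add: zp)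
    have d0: "\<phi> differentiable (at y)" if "y \<in> U" for y
      unfolding \<phi>_def by (rule differentiable_nth[OF fdiff[OF that]])
    have dk: "pd k \<phi> differentiable (at y)" if "y \<in> U" for y k
      by (rule diff_transform[OF differentiable_nth[OF zdiff[OF that, where j=k], where a=a] openU that]) (simp add: zp)
    have ck: "isCont (pd l (pd k \<phi>)) x" for k l
    proof -
      have c: "isCont (\<lambda>q. pd l (pd k f) q $ a) x"
        using differentiable_imp_continuous_within[OF differentiable_nth[OF zzdiff[OF xU]]] by blast
      have "eventually (\<lambda>q. pd l (pd k \<phi>) q = pd l (pd k f) q $ a) (nhds x)"
        unfolding eventually_nhds
      proof (intro exI conjI ballI)
        fix q assume q: "q \<in> U"
        have "pd l (pd k \<phi>) q = pd l (\<lambda>y. pd k f y $ a) q"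
          by (rule pd_cong_on[OF openU q]) (simp add: zp)
        also have "\<dots> = pd l (pd k f) q $ a" by (rule pd_nth[OF zdiff[OF q]])
        finally show "pd l (pd k \<phi>) q = pd l (pd k f) q $ a" .
      qed (use openU xU in auto)
      from isCont_cong[OF this] c show ?thesis by simp
    qed
    show ?thesis using e1 e2 schwarz[OF openU xU d0 dk dk ck ck] by simp
  qed
  then show ?thesis by (simp add: vec_eq_iff)
qed

lemma pd_ginner:
  assumes A: "A differentiable (at x)" and B: "B differentiable (at x)"
  shows "pd i (\<lambda>y. g_inner g (f y) (A y) (B y)) x
     = Dg (z i) (A x) (B x) + gi (pd i A x) (B x) + gi (A x) (pd i B x)"
proof -
  note d = gfdiff[OF xU] differentiable_nth[OF A] differentiable_nth[OF B]
  have "pd i (\<lambda>y. g_inner g (f y) (A y) (B y)) x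
      = (\<Sum>a\<in>UNIV. \<Sum>b\<in>UNIV. pd i (\<lambda>y. g (f y) $ a $ b * A y $ a * B y $ b) x)"
    unfolding g_inner_def by (simp add: pd_sum d)
  also have "\<dots> = (\<Sum>a\<in>UNIV. \<Sum>b\<in>UNIV. (\<Sum>c\<in>UNIV. z i $ c * dg c a b) * A x $ a * B x $ b
      + G $ a $ b * pd i A x $ a * B x $ b + G $ a $ b * A x $ a * pd i B x $ b)"
    by (simp add: pd_mult d pd_gf pd_nth[OF A] pd_nth[OF B] algebra_simps)
  also have "\<dots> = Dg (z i) (A x) (B x) + gi (pd i A x) (B x) + gi (A x) (pd i B x)"
    by (simp add: Dg_alt g_inner_def sum.distrib)
  finally show ?thesis .
qed

end

context hyper begin

abbreviation "P i m j \<equiv> pd i (\<lambda>q. induced_metric g f q $ m $ j) x"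

lemma im_eq: "(\<lambda>q. induced_metric g f q $ m $ j) = (\<lambda>q. g_inner g (f q) (zf f q m) (zf f q j))"
  by (simp add: fun_eq_iff induced_metric_def g_inner_def)

lemma P_eq: "P i m j = Dg (z i) (z m) (z j) + gi (S i m) (z j) + gi (z m) (S i j)"
  unfolding im_eq S_def by (rule pd_ginner[OF zdiff[OF xU] zdiff[OF xU]])

lemma hm_hi_comp: "(\<Sum>k\<in>UNIV. hm $ l $ k * hi $ k $ m) = (if l = m then 1 else 0)"
proof -
  have "(\<Sum>k\<in>UNIV. hm $ l $ k * hi $ k $ m) = (hm ** hi) $ l $ m" by (simp add: matrix_matrix_mult_def)
  then show ?thesis using hm_hi by (simp add: mat_def)
qed

lemma chr_h_low: "(\<Sum>k\<in>UNIV. hm $ l $ k * christoffel (induced_metric g f) x k i j)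
   = (P i l j + P j l i - P l i j) / 2"
proof -
  define T where "T m = P i m j + P j m i - P m i j" for m
  have ch: "christoffel (induced_metric g f) x k i j = (1/2) * (\<Sum>m\<in>UNIV. hi $ k $ m * T m)" for k
    by (simp add: christoffel_def T_def hinv_def)
  have "(\<Sum>k\<in>UNIV. hm $ l $ k * christoffel (induced_metric g f) x k i j)
      = (1/2) * (\<Sum>k\<in>UNIV. \<Sum>m\<in>UNIV. hm $ l $ k * hi $ k $ m * T m)"
    by (simp add: ch sum_distrib_left mult_ac)
  also have "\<dots> = (1/2) * (\<Sum>m\<in>UNIV. (\<Sum>k\<in>UNIV. hm $ l $ k * hi $ k $ m) * T m)"
    by (subst sum.swap) (simp add: sum_distrib_right)
  also have "\<dots> = (1/2) * (\<Sum>m\<in>UNIV. if l = m then T m else 0)"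
    by (intro arg_cong[where f="\<lambda>x. (1/2) * x"] sum.cong) (auto simp: hm_hi_comp)
  also have "\<dots> = T l / 2" by simp
  finally show ?thesis by (simp add: T_def)
qed

definition "tau i j = (\<chi> a. sff g f x a i j)"

lemma tau_eq: "tau i j = S i j + Gam (z j) (z i) - (\<Sum>k\<in>UNIV. christoffel (induced_metric g f) x k i j *\<^sub>R z k)"
  by (simp add: vec_eq_iff tau_def sff_def S_comp Gam_def sum_component mult_ac)

lemma gi_tang: "gi (\<Sum>k\<in>UNIV. christoffel (induced_metric g f) x k i j *\<^sub>R z k) (z l)
   = (P i l j + P j l i - P l i j) / 2"
proof -
  have "gi (\<Sum>k\<in>UNIV. christoffel (induced_metric g f) x k i j *\<^sub>R z k) (z l)
      = (\<Sum>k\<in>UNIV. hm $ l $ k * christoffel (induced_metric g f) x k i j)"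
    by (simp add: gi_sum_left gi_scale_left hm_eq gi_sym[of "z l"] mult_ac)
  then show ?thesis by (simp add: chr_h_low)
qed

lemma gauss: "gi (tau i j) (z l) = 0"
proof -
  have "gi (tau i j) (z l) = gi (S i j) (z l) + gi (Gam (z j) (z i)) (z l) - (P i l j + P j l i - P l i j) / 2"
    by (simp add: tau_eq gi_add_left gi_diff_left gi_tang)
  also have "\<dots> = 0"
  proof -
    have e1: "Dg (z l) (z i) (z j) = Dg (z l) (z j) (z i)" by (rule Dg_sym)
    have e2: "gi (S l i) (z j) = gi (S i l) (z j)" by (simp add: S_sym)
    have e3: "gi (z l) (S j i) = gi (S i j) (z l)" by (simp add: S_sym gi_sym)
    have e4: "gi (z l) (S i j) = gi (S i j) (z l)" by (simp add: gi_sym)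
    have e5: "gi (z i) (S l j) = gi (S j l) (z i)" by (simp add: S_sym gi_sym)
    show ?thesis unfolding gi_Gam P_eq e1 e2 e3 e4 e5 by (simp add: field_simps)
  qed
  finally show ?thesis .
qed

lemma gi_tau_N: "gi (tau i j) Nx = gi (S i j) Nx + gi (Gam (z j) (z i)) Nx"
  by (simp add: tau_eq gi_add_left gi_diff_left gi_sum_left gi_scale_left zN)

end

lemma sum_lin3: "(\<Sum>j\<in>A. c j * ((a j + b j - d j) / 2))
   = ((\<Sum>j\<in>A. c j * a j) + (\<Sum>j\<in>A. c j * b j) - (\<Sum>j\<in>A. c j * d j)) / (2::real)"
proof -
  have "(\<Sum>j\<in>A. c j * ((a j + b j - d j) / 2)) = (\<Sum>j\<in>A. c j * a j / 2 + c j * b j / 2 - c j * d j / 2)"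
    by (intro sum.cong refl) (simp add: field_simps)
  also have "\<dots> = (\<Sum>j\<in>A. c j * a j) / 2 + (\<Sum>j\<in>A. c j * b j) / 2 - (\<Sum>j\<in>A. c j * d j) / 2"
    by (simp only: sum.distrib sum_subtractf sum_divide_distrib)
  finally show ?thesis by (simp add: field_simps)
qed

context hyper begin

abbreviation "Wp \<equiv> W (f x)"
definition "dN i = pd i N x"
definition "DWv u = (\<Sum>c\<in>UNIV. u $ c *\<^sub>R pd c W (f x))"

lemma DWv_sum: "DWv (\<Sum>k\<in>A. c k *\<^sub>R u k) = (\<Sum>k\<in>A. c k *\<^sub>R DWv (u k))"
  by (simp add: vec_eq_iff DWv_def sum_component sum_distrib_left sum_distrib_right
     mult_ac sum.swap[of _ A])

lemma w_fun: "wfun g W f N = (\<lambda>y. g_inner g (f y) (N y) (W (f y)))"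
  by (simp add: fun_eq_iff wfun_def)

lemma w_deriv: "pd i (wfun g W f N) x = Dg (z i) Nx Wp + gi (dN i) Wp + gi Nx (DWv (z i))"
proof -
  have "pd i (\<lambda>y. W (f y)) x = DWv (z i)"
    unfolding DWv_def by (rule pd_chain[OF Wdiff[OF pV'] fdiff[OF xU]])
  then show ?thesis unfolding w_fun dN_def using pd_ginner[OF Ndiff[OF xU] Wfdiff[OF xU], of i] by simp
qed

lemma Nz_deriv: "Dg (z i) Nx (z k) + gi (dN i) (z k) + gi Nx (S i k) = 0"
proof -
  have "pd i (\<lambda>y. g_inner g (f y) (N y) (pd k f y)) x = 0"
    by (rule pd_const_on[OF openU xU]) (use normal in \<open>simp add: unit_normal_on_def\<close>)
  then show ?thesis using pd_ginner[OF Ndiff[OF xU] zdiff[OF xU, where j=k], of i]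
    by (simp add: dN_def S_def)
qed

lemma NN_deriv: "Dg (z i) Nx Nx + 2 * gi (dN i) Nx = 0"
proof -
  have "pd i (\<lambda>y. g_inner g (f y) (N y) (N y)) x = 0"
    by (rule pd_const_on[OF openU xU]) (use normal in \<open>simp add: unit_normal_on_def\<close>)
  then show ?thesis using pd_ginner[OF Ndiff[OF xU] Ndiff[OF xU], of i]
    by (simp add: dN_def gi_sym[of Nx])
qed

lemma covd_split: "covd_along g W (f x) u = DWv u + Gam u Wp"
proof -
  have "pd e (\<lambda>q. W q $ b) (f x) = pd e W (f x) $ b" for e b by (rule pd_nth[OF Wdiff[OF pV']])
  then show ?thesis
    by (simp add: vec_eq_iff covd_along_def cov_deriv_def DWv_def Gam_def sum_component
        distrib_left sum.distrib sum_distrib_left mult_ac)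
qed

lemma sum_Dg3: "(\<Sum>j\<in>UNIV. c $ j * Dg u v (z j)) = Dg u v (\<Sum>j\<in>UNIV. c $ j *\<^sub>R z j)"
  by (simp add: Dg_sum3)
lemma sum_Dg2: "(\<Sum>j\<in>UNIV. c $ j * Dg u (z j) v) = Dg u (\<Sum>j\<in>UNIV. c $ j *\<^sub>R z j) v"
  by (simp add: Dg_sum2)
lemma sum_Dg1: "(\<Sum>j\<in>UNIV. c $ j * Dg (z j) u v) = Dg (\<Sum>j\<in>UNIV. c $ j *\<^sub>R z j) u v"
  by (simp add: Dg_sum1)
lemma sum_gi2: "(\<Sum>j\<in>UNIV. c $ j * gi u (z j)) = gi u (\<Sum>j\<in>UNIV. c $ j *\<^sub>R z j)"
  by (simp add: gi_sum_right gi_scale_right)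

lemma claim5_core:
  "(\<Sum>i\<in>UNIV. \<Sum>j\<in>UNIV. cf Wp $ i * cf Wp $ j * gi (tau i j) Nx)
   = - ((\<Sum>i\<in>UNIV. cf Wp $ i * pd i (wfun g W f N) x) + dirderiv (normsq g W) (f x) Nx / 2)"
proof -
  define c where "c = cf Wp"
  define Wt where "Wt = Proj Wp"
  define w where "w = gi Nx Wp"
  define K where "K = (\<Sum>i\<in>UNIV. c $ i * gi (dN i) Wt)"
  have Wt_eq: "Wt = (\<Sum>j\<in>UNIV. c $ j *\<^sub>R z j)" by (simp add: Wt_def Proj_def c_def)
  have Wp_eq: "Wp = Wt + w *\<^sub>R Nx" unfolding Wt_def w_def by (rule decomp)
  have A: "(\<Sum>j\<in>UNIV. c $ j * gi (S i j) Nx) = - Dg (z i) Nx Wt - gi (dN i) Wt" for i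
  proof -
    have e: "gi (S i j) Nx = - Dg (z i) Nx (z j) - gi (dN i) (z j)" for j
      using Nz_deriv[of i j] gi_sym[of "S i j" Nx] by simp
    have "(\<Sum>j\<in>UNIV. c $ j * gi (S i j) Nx)
        = (\<Sum>j\<in>UNIV. - (c $ j * Dg (z i) Nx (z j)) - c $ j * gi (dN i) (z j))"
      by (rule sum.cong) (simp_all add: e algebra_simps)
    also have "\<dots> = - (\<Sum>j\<in>UNIV. c $ j * Dg (z i) Nx (z j)) - (\<Sum>j\<in>UNIV. c $ j * gi (dN i) (z j))"
      by (simp add: sum_subtractf sum_negf)
    finally have "(\<Sum>j\<in>UNIV. c $ j * gi (S i j) Nx)
        = - (\<Sum>j\<in>UNIV. c $ j * Dg (z i) Nx (z j)) - (\<Sum>j\<in>UNIV. c $ j * gi (dN i) (z j))" .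
    then show ?thesis by (simp only: sum_Dg3 sum_gi2 Wt_eq)
  qed
  have B: "(\<Sum>i\<in>UNIV. \<Sum>j\<in>UNIV. c $ i * c $ j * gi (S i j) Nx) = - Dg Wt Nx Wt - K"
  proof -
    have "(\<Sum>i\<in>UNIV. \<Sum>j\<in>UNIV. c $ i * c $ j * gi (S i j) Nx)
       = (\<Sum>i\<in>UNIV. c $ i * (- Dg (z i) Nx Wt - gi (dN i) Wt))"
      by (simp add: A[symmetric] sum_distrib_left mult_ac)
    also have "\<dots> = - (\<Sum>i\<in>UNIV. c $ i * Dg (z i) Nx Wt) - K"
      by (simp add: K_def algebra_simps sum_subtractf sum_negf)
    finally show ?thesis by (simp only: sum_Dg1 Wt_eq)
  qed
  have C1: "(\<Sum>j\<in>UNIV. c $ j * gi (Gam (z j) (z i)) Nx)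
     = (Dg Wt Nx (z i) + Dg (z i) Nx Wt - Dg Nx Wt (z i)) / 2" for i
    by (simp only: gi_Gam sum_lin3 sum_Dg1 sum_Dg2 sum_Dg3 Wt_eq)
  have C: "(\<Sum>i\<in>UNIV. \<Sum>j\<in>UNIV. c $ i * c $ j * gi (Gam (z j) (z i)) Nx)
     = (Dg Wt Nx Wt + Dg Wt Nx Wt - Dg Nx Wt Wt) / 2"
  proof -
    have "(\<Sum>i\<in>UNIV. \<Sum>j\<in>UNIV. c $ i * c $ j * gi (Gam (z j) (z i)) Nx)
       = (\<Sum>i\<in>UNIV. c $ i * ((Dg Wt Nx (z i) + Dg (z i) Nx Wt - Dg Nx Wt (z i)) / 2))"
    proof -
      have "(\<Sum>i\<in>UNIV. \<Sum>j\<in>UNIV. c $ i * c $ j * gi (Gam (z j) (z i)) Nx)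
         = (\<Sum>i\<in>UNIV. c $ i * (\<Sum>j\<in>UNIV. c $ j * gi (Gam (z j) (z i)) Nx))"
        by (simp add: sum_distrib_left mult_ac)
      then show ?thesis by (simp only: C1)
    qed
    also have "\<dots> = (Dg Wt Nx Wt + Dg Wt Nx Wt - Dg Nx Wt Wt) / 2"
      by (simp only: sum_lin3 sum_Dg1 sum_Dg2 sum_Dg3 Wt_eq)
    finally show ?thesis .
  qed
  have LHS: "(\<Sum>i\<in>UNIV. \<Sum>j\<in>UNIV. c $ i * c $ j * gi (tau i j) Nx)
      = - Dg Wt Nx Wt - K + (Dg Wt Nx Wt + Dg Wt Nx Wt - Dg Nx Wt Wt) / 2"
  proof -
    have "(\<Sum>i\<in>UNIV. \<Sum>j\<in>UNIV. c $ i * c $ j * gi (tau i j) Nx)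
       = (\<Sum>i\<in>UNIV. \<Sum>j\<in>UNIV. c $ i * c $ j * gi (S i j) Nx)
         + (\<Sum>i\<in>UNIV. \<Sum>j\<in>UNIV. c $ i * c $ j * gi (Gam (z j) (z i)) Nx)"
      by (simp add: gi_tau_N distrib_left sum.distrib)
    then show ?thesis by (simp only: B C)
  qed
  have dNW: "gi (dN i) Wp = gi (dN i) Wt - w / 2 * Dg (z i) Nx Nx" for i
  proof -
    have "gi (dN i) Nx = - Dg (z i) Nx Nx / 2" using NN_deriv[of i] by linarith
    then show ?thesis by (simp add: Wp_eq gi_add_right gi_scale_right)
  qed
  have D: "(\<Sum>i\<in>UNIV. c $ i * pd i (wfun g W f N) x)
     = Dg Wt Nx Wp + K - w / 2 * Dg Wt Nx Nx + gi Nx (DWv Wt)"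
  proof -
    have "(\<Sum>i\<in>UNIV. c $ i * pd i (wfun g W f N) x)
       = (\<Sum>i\<in>UNIV. c $ i * Dg (z i) Nx Wp) + K - w / 2 * (\<Sum>i\<in>UNIV. c $ i * Dg (z i) Nx Nx)
         + (\<Sum>i\<in>UNIV. c $ i * gi Nx (DWv (z i)))"
      by (simp add: w_deriv dNW K_def algebra_simps sum.distrib sum_subtractf sum_distrib_left)
    also have "(\<Sum>i\<in>UNIV. c $ i * gi Nx (DWv (z i))) = gi Nx (DWv Wt)"
      by (simp add: Wt_eq DWv_sum gi_sum_right gi_scale_right)
    finally show ?thesis by (simp only: sum_Dg1 Wt_eq)
  qed
  define NW where "NW = dirderiv (normsq g W) (f x) Nx"
  have NW_eq: "NW = 2 * gi (covd_along g W (f x) Nx) Wp" by (simp add: NW_def dirderiv_normsq)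
  have NN0: "gi (covd_along g W (f x) Nx) Nx = 0" using killing_antisym[of Nx Nx] by simp
  have E1: "gi Nx (covd_along g W (f x) Wt) = - NW / 2"
  proof -
    have "gi Nx (covd_along g W (f x) Wt) = - gi (covd_along g W (f x) Nx) Wt"
      using killing_antisym[of Wt Nx] gi_sym[of Nx] by (simp add: algebra_simps)
    also have "gi (covd_along g W (f x) Nx) Wt = gi (covd_along g W (f x) Nx) Wp"
      using NN0 by (simp add: Wp_eq gi_add_right gi_scale_right)
    finally show ?thesis by (simp add: NW_eq)
  qed
  have E: "gi Nx (DWv Wt) = - NW / 2 - (Dg Wt Nx Wp + Dg Wp Nx Wt - Dg Nx Wt Wp) / 2"
    using E1 by (simp add: covd_split gi_add_right gi_sym[of Nx "Gam Wt Wp"] gi_Gam)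
  have F1: "Dg Wt Nx Wp = Dg Wt Nx Wt + w * Dg Wt Nx Nx" by (simp add: Wp_eq Dg_add3 Dg_scale3)
  have F2: "Dg Wp Nx Wt = Dg Wt Nx Wt + w * Dg Nx Nx Wt" by (simp add: Wp_eq Dg_add1 Dg_scale1)
  have F3: "Dg Nx Wt Wp = Dg Nx Wt Wt + w * Dg Nx Wt Nx" by (simp add: Wp_eq Dg_add3 Dg_scale3)
  have F4: "Dg Nx Nx Wt = Dg Nx Wt Nx" by (rule Dg_sym)
  have "(\<Sum>i\<in>UNIV. \<Sum>j\<in>UNIV. c $ i * c $ j * gi (tau i j) Nx)
     = - ((\<Sum>i\<in>UNIV. c $ i * pd i (wfun g W f N) x) + NW / 2)"
    unfolding LHS D E F1 F2 F3 F4 by (simp add: field_simps)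
  then show ?thesis by (simp add: c_def NW_def)
qed

end

lemma sum4_perm: "(\<Sum>d\<in>A. \<Sum>t\<in>B. \<Sum>i\<in>C. \<Sum>j\<in>D. F d t i j) = (\<Sum>i\<in>C. \<Sum>j\<in>D. \<Sum>d\<in>A. \<Sum>t\<in>B. F d t i j)"
proof -
  have "(\<Sum>d\<in>A. \<Sum>t\<in>B. \<Sum>i\<in>C. \<Sum>j\<in>D. F d t i j) = (\<Sum>d\<in>A. \<Sum>i\<in>C. \<Sum>t\<in>B. \<Sum>j\<in>D. F d t i j)"
    by (rule sum.cong[OF refl]) (rule sum.swap)
  also have "\<dots> = (\<Sum>d\<in>A. \<Sum>i\<in>C. \<Sum>j\<in>D. \<Sum>t\<in>B. F d t i j)"
    by (rule sum.cong[OF refl]) (rule sum_swap23)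
  also have "\<dots> = (\<Sum>i\<in>C. \<Sum>d\<in>A. \<Sum>j\<in>D. \<Sum>t\<in>B. F d t i j)"
    by (rule sum.swap)
  also have "\<dots> = (\<Sum>i\<in>C. \<Sum>j\<in>D. \<Sum>d\<in>A. \<Sum>t\<in>B. F d t i j)"
    by (rule sum_swap23)
  finally show ?thesis .
qed

context hyper begin

lemma sum_lower': "(\<Sum>a\<in>UNIV. lower g (f x) u $ a * v $ a) = gi v u"
  using sum_lower[of v g "f x" u] by (simp add: mult_ac)

lemma tang_eq: "tang_field g W f x = cf Wp"
proof -
  have "(\<Sum>a\<in>UNIV. hi $ i $ j * lower g (f x) Wp $ a * z i $ a) = hi $ i $ j * gi (z i) Wp" for i j
  proof -
    have "(\<Sum>a\<in>UNIV. hi $ i $ j * lower g (f x) Wp $ a * z i $ a)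
       = hi $ i $ j * (\<Sum>a\<in>UNIV. z i $ a * lower g (f x) Wp $ a)" by (simp add: sum_distrib_left mult_ac)
    also have "\<dots> = hi $ i $ j * gi (z i) Wp" by (simp only: sum_lower)
    finally show ?thesis .
  qed
  then show ?thesis by (simp add: tang_field_def cf_def vec_eq_iff)
qed

lemma push_tang: "push f x (tang_field g W f x) = Proj Wp"
  by (simp add: push_def tang_eq Proj_def)

lemma Bup_lower: "(\<Sum>b\<in>UNIV. Bup g f x e b * lower g (f x) v $ b) = Proj v $ e"
proof -
  have "(\<Sum>b\<in>UNIV. Bup g f x e b * lower g (f x) v $ b)
      = (\<Sum>i\<in>UNIV. \<Sum>j\<in>UNIV. hi $ i $ j * z i $ e * (\<Sum>b\<in>UNIV. lower g (f x) v $ b * z j $ b))"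
    by (simp add: Bup_def sum_distrib_left sum_distrib_right mult_ac sum.swap[of _ "UNIV :: 'm set"])
  also have "\<dots> = (\<Sum>i\<in>UNIV. \<Sum>j\<in>UNIV. hi $ i $ j * z i $ e * gi (z j) v)"
    by (simp only: sum_lower')
  also have "\<dots> = Proj v $ e"
  proof -
    have r: "(\<Sum>j\<in>UNIV. hi $ j $ i * gi (z j) v) * z i $ e = (\<Sum>j\<in>UNIV. hi $ i $ j * z i $ e * gi (z j) v)" for i
    proof -
      have "(\<Sum>j\<in>UNIV. hi $ j $ i * gi (z j) v) = (\<Sum>j\<in>UNIV. hi $ i $ j * gi (z j) v)"
        by (intro sum.cong refl) (rule arg_cong[where f="\<lambda>t. t * _"], rule hi_sym)
      then show ?thesis by (simp add: sum_distrib_left sum_distrib_right mult_ac)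
    qed
    have "Proj v $ e = (\<Sum>i\<in>UNIV. (\<Sum>j\<in>UNIV. hi $ j $ i * gi (z j) v) * z i $ e)"
      by (simp add: Proj_def cf_def sum_component)
    then show ?thesis by (simp only: r)
  qed
  finally show ?thesis .
qed

lemma Bmix_X: "(\<Sum>c\<in>UNIV. Bmix g f x t c * X $ c) = Proj X $ t"
proof -
  have "(\<Sum>c\<in>UNIV. Bmix g f x t c * X $ c) = (\<Sum>d\<in>UNIV. Bup g f x t d * lower g (f x) X $ d)"
  proof -
    have "(\<Sum>c\<in>UNIV. Bmix g f x t c * X $ c) = (\<Sum>c\<in>UNIV. \<Sum>d\<in>UNIV. Bup g f x t d * (G $ d $ c * X $ c))"
      by (simp add: Bmix_def sum_distrib_left sum_distrib_right mult_ac)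
    also have "\<dots> = (\<Sum>d\<in>UNIV. \<Sum>c\<in>UNIV. Bup g f x t d * (G $ d $ c * X $ c))"
      by (rule sum.swap)
    also have "\<dots> = (\<Sum>d\<in>UNIV. Bup g f x t d * lower g (f x) X $ d)"
      by (simp add: lower_def sum_distrib_left)
    finally show ?thesis .
  qed
  then show ?thesis by (simp add: Bup_lower)
qed

lemma Col_eq: "(\<chi> c. cov_deriv g W (f x) c e) = Col e" by (simp add: Col_def)

lemma gi_lowerL: "(\<Sum>a\<in>UNIV. lower g (f x) u $ a * v $ a) = gi u v"
  using sum_lower'[of u v] gi_sym by simp

lemma kd_X: "(\<Sum>c\<in>UNIV. (kdelta a c - Bmix g f x a c) * X $ c) = (gi Nx X *\<^sub>R Nx) $ a"
proof -
  have "(\<Sum>c\<in>UNIV. (kdelta a c - Bmix g f x a c) * X $ c)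
     = (\<Sum>c\<in>UNIV. kdelta a c * X $ c) - (\<Sum>c\<in>UNIV. Bmix g f x a c * X $ c)"
    by (simp add: left_diff_distrib sum_subtractf)
  also have "(\<Sum>c\<in>UNIV. kdelta a c * X $ c) = X $ a"
  proof -
    have "(\<Sum>c\<in>UNIV. kdelta a c * X $ c) = (\<Sum>c\<in>UNIV. if a = c then X $ c else 0)"
      by (rule sum.cong) (auto simp: kdelta_def)
    then show ?thesis by simp
  qed
  also have "(\<Sum>c\<in>UNIV. Bmix g f x a c * X $ c) = Proj X $ a" by (rule Bmix_X)
  also have "X $ a - Proj X $ a = (gi Nx X *\<^sub>R Nx) $ a"
    using arg_cong[OF decomp[of X], of "\<lambda>v. v $ a"] by simp
  finally show ?thesis .
qed

lemma covdWt_N: "gi (covd_along g W (f x) (Proj Wp)) Nx = - dirderiv (normsq g W) (f x) Nx / 2"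
proof -
  have NN0: "gi (covd_along g W (f x) Nx) Nx = 0" using killing_antisym[of Nx Nx] by simp
  have "gi (covd_along g W (f x) (Proj Wp)) Nx = - gi (covd_along g W (f x) Nx) (Proj Wp)"
    using killing_antisym[of "Proj Wp" Nx] by (simp add: algebra_simps)
  also have "gi (covd_along g W (f x) Nx) (Proj Wp) = gi (covd_along g W (f x) Nx) Wp"
    using NN0 decomp[of Wp] gi_add_right gi_scale_right by (metis add_0_right mult_zero_right)
  finally show ?thesis by (simp add: dirderiv_normsq)
qed

lemma covdWt_W: "gi (covd_along g W (f x) (Proj Wp)) Wp = - dirderiv (normsq g W) (f x) Nx / 2 * gi Nx Wp"
proof -
  have z0: "gi (covd_along g W (f x) (Proj Wp)) (Proj Wp) = 0"
    using killing_antisym[of "Proj Wp" "Proj Wp"] by simp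
  have "gi (covd_along g W (f x) (Proj Wp)) Wp
      = gi (covd_along g W (f x) (Proj Wp)) (Proj Wp + gi Nx Wp *\<^sub>R Nx)"
    using decomp[of Wp] by simp
  also have "\<dots> = gi Nx Wp * gi (covd_along g W (f x) (Proj Wp)) Nx"
    by (simp add: gi_add_right gi_scale_right z0)
  finally show ?thesis by (simp add: covdWt_N)
qed

lemma claim1: "(\<Sum>e\<in>UNIV. \<Sum>b\<in>UNIV. \<Sum>a\<in>UNIV. Bup g f x e b * lower g (f x) Wp $ b
       * lower g (f x) (\<chi> c. cov_deriv g W (f x) c e) $ a * Wp $ a)
     = gi (covd_along g W (f x) (push f x (tang_field g W f x))) Wp"
proof -
  have "(\<Sum>e\<in>UNIV. \<Sum>b\<in>UNIV. \<Sum>a\<in>UNIV. Bup g f x e b * lower g (f x) Wp $ b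
       * lower g (f x) (\<chi> c. cov_deriv g W (f x) c e) $ a * Wp $ a)
     = (\<Sum>e\<in>UNIV. (\<Sum>b\<in>UNIV. Bup g f x e b * lower g (f x) Wp $ b)
       * (\<Sum>a\<in>UNIV. lower g (f x) (Col e) $ a * Wp $ a))"
    by (simp add: Col_eq sum_distrib_left sum_distrib_right mult_ac) (rule sum.cong[OF refl], rule sum.swap)
  also have "\<dots> = (\<Sum>e\<in>UNIV. Proj Wp $ e * gi (Col e) Wp)"
    by (simp only: Bup_lower gi_lowerL)
  also have "\<dots> = gi (covd_along g W (f x) (push f x (tang_field g W f x))) Wp"
    by (simp add: push_tang covd_Col gi_sum_left gi_scale_left)
  finally show ?thesis .
qed

lemma claim2: "(\<Sum>t\<in>UNIV. \<Sum>c\<in>UNIV. lower g (f x) Wp $ t * (kdelta t c - Bmix g f x t c) * X $ c)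
     = gi Nx Wp * gi Nx X"
proof -
  have "(\<Sum>t\<in>UNIV. \<Sum>c\<in>UNIV. lower g (f x) Wp $ t * (kdelta t c - Bmix g f x t c) * X $ c)
     = (\<Sum>t\<in>UNIV. lower g (f x) Wp $ t * (\<Sum>c\<in>UNIV. (kdelta t c - Bmix g f x t c) * X $ c))"
    by (simp add: sum_distrib_left mult_ac)
  also have "\<dots> = (\<Sum>t\<in>UNIV. lower g (f x) Wp $ t * (gi Nx X *\<^sub>R Nx) $ t)"
    by (simp only: kd_X)
  also have "\<dots> = gi Wp (gi Nx X *\<^sub>R Nx)" by (rule gi_lowerL)
  finally show ?thesis by (simp add: gi_scale_right gi_sym[of Wp])
qed

lemma claim3: "(\<Sum>e\<in>UNIV. \<Sum>b\<in>UNIV. \<Sum>a\<in>UNIV. \<Sum>c\<in>UNIV. Bup g f x e b * lower g (f x) Wp $ b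
       * lower g (f x) (\<chi> d. cov_deriv g W (f x) d e) $ a * (kdelta a c - Bmix g f x a c) * X $ c)
     = gi (covd_along g W (f x) (push f x (tang_field g W f x))) Nx * gi Nx X"
proof -
  have "(\<Sum>e\<in>UNIV. \<Sum>b\<in>UNIV. \<Sum>a\<in>UNIV. \<Sum>c\<in>UNIV. Bup g f x e b * lower g (f x) Wp $ b
       * lower g (f x) (\<chi> d. cov_deriv g W (f x) d e) $ a * (kdelta a c - Bmix g f x a c) * X $ c)
     = (\<Sum>e\<in>UNIV. (\<Sum>b\<in>UNIV. Bup g f x e b * lower g (f x) Wp $ b)
       * (\<Sum>a\<in>UNIV. lower g (f x) (Col e) $ a * (\<Sum>c\<in>UNIV. (kdelta a c - Bmix g f x a c) * X $ c)))"
    by (simp add: Col_eq sum_distrib_left sum_distrib_right mult_ac)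
      (rule sum.cong[OF refl], rule trans[OF sum.swap], rule sum.cong[OF refl], rule sum.swap)
  also have "\<dots> = (\<Sum>e\<in>UNIV. Proj Wp $ e * gi (Col e) (gi Nx X *\<^sub>R Nx))"
    by (simp only: Bup_lower kd_X gi_lowerL)
  also have "\<dots> = gi (covd_along g W (f x) (Proj Wp)) Nx * gi Nx X"
    by (simp add: covd_Col gi_sum_left gi_scale_left gi_scale_right sum_distrib_left mult_ac)
  finally show ?thesis by (simp add: push_tang)
qed

end

lemma sum3_prod: "(\<Sum>d\<in>D. \<Sum>t\<in>T. \<Sum>a\<in>A. p d * q t * r a)
    = (\<Sum>d\<in>D. p d) * (\<Sum>t\<in>T. q t) * (\<Sum>a\<in>A. (r a :: real))"
proof -
  have "(\<Sum>d\<in>D. p d) * (\<Sum>t\<in>T. q t) * (\<Sum>a\<in>A. r a) = (\<Sum>d\<in>D. \<Sum>t\<in>T. p d * q t) * (\<Sum>a\<in>A. r a)"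
    by (simp add: sum_product)
  also have "\<dots> = (\<Sum>d\<in>D. \<Sum>t\<in>T. p d * q t * (\<Sum>a\<in>A. r a))"
    by (simp only: sum_distrib_right)
  also have "\<dots> = (\<Sum>d\<in>D. \<Sum>t\<in>T. \<Sum>a\<in>A. p d * q t * r a)"
    by (simp only: sum_distrib_left)
  finally show ?thesis by simp
qed

context hyper begin

lemma claim4:
  assumes mc: "\<forall>a. (\<Sum>i\<in>UNIV. \<Sum>j\<in>UNIV. hi $ i $ j * sff g f x a i j) = r * Nx $ a"
  shows "(\<Sum>i\<in>UNIV. \<Sum>j\<in>UNIV. \<Sum>a\<in>UNIV. hi $ i $ j * sff g f x a i j * lower g (f x) Wp $ a)
     = r * gi Nx Wp"
proof -
  have "(\<Sum>i\<in>UNIV. \<Sum>j\<in>UNIV. \<Sum>a\<in>UNIV. hi $ i $ j * sff g f x a i j * lower g (f x) Wp $ a)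
     = (\<Sum>i\<in>UNIV. \<Sum>a\<in>UNIV. \<Sum>j\<in>UNIV. hi $ i $ j * sff g f x a i j * lower g (f x) Wp $ a)"
    by (rule sum_swap23)
  also have "\<dots> = (\<Sum>a\<in>UNIV. \<Sum>i\<in>UNIV. \<Sum>j\<in>UNIV. hi $ i $ j * sff g f x a i j * lower g (f x) Wp $ a)"
    by (rule sum.swap)
  also have "\<dots> = (\<Sum>a\<in>UNIV. (\<Sum>i\<in>UNIV. \<Sum>j\<in>UNIV. hi $ i $ j * sff g f x a i j) * lower g (f x) Wp $ a)"
    by (simp add: sum_distrib_right)
  also have "\<dots> = (\<Sum>a\<in>UNIV. r * (Nx $ a * lower g (f x) Wp $ a))"
    by (simp only: mc) (simp add: mult_ac)
  also have "\<dots> = r * gi Nx Wp" by (simp add: sum_distrib_left[symmetric] sum_lower)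
  finally show ?thesis .
qed

lemma G_eq: "gi (push f x (grad_h g f \<phi> x)) Wp = (\<Sum>i\<in>UNIV. cf Wp $ i * pd i \<phi> x)"
proof -
  have "gi (push f x (grad_h g f \<phi> x)) Wp = (\<Sum>j\<in>UNIV. \<Sum>i\<in>UNIV. hi $ i $ j * pd i \<phi> x * gi (z j) Wp)"
    by (simp add: push_def grad_h_def gi_sum_left gi_scale_left sum_distrib_right)
  also have "\<dots> = (\<Sum>i\<in>UNIV. \<Sum>j\<in>UNIV. hi $ i $ j * pd i \<phi> x * gi (z j) Wp)"
    by (rule sum.swap)
  also have "\<dots> = (\<Sum>i\<in>UNIV. cf Wp $ i * pd i \<phi> x)"
  proof (rule sum.cong[OF refl])
    fix i
    have "cf Wp $ i = (\<Sum>j\<in>UNIV. hi $ i $ j * gi (z j) Wp)"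
      unfolding cf_def by (simp, intro sum.cong refl, simp add: hi_sym)
    then show "(\<Sum>j\<in>UNIV. hi $ i $ j * pd i \<phi> x * gi (z j) Wp) = cf Wp $ i * pd i \<phi> x"
      by (simp add: sum_distrib_left sum_distrib_right mult_ac)
  qed
  finally show ?thesis .
qed

lemma Wl_A: "(\<Sum>d\<in>UNIV. lower g (f x) Wp $ d * Acoef g f x i d) = cf Wp $ i"
proof -
  have "(\<Sum>d\<in>UNIV. lower g (f x) Wp $ d * Acoef g f x i d)
     = (\<Sum>j\<in>UNIV. hi $ i $ j * (\<Sum>d\<in>UNIV. lower g (f x) Wp $ d * z j $ d))"
    by (simp add: Acoef_def sum_distrib_left mult_ac sum.swap[of _ "UNIV :: 'n set"])
  also have "\<dots> = (\<Sum>j\<in>UNIV. hi $ j $ i * gi (z j) Wp)"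
    by (simp add: sum_lower' hi_sym)
  finally show ?thesis by (simp add: cf_def)
qed

lemma tau_X: "gi (tau i j) X = gi Nx X * gi (tau i j) Nx"
proof -
  have "gi (tau i j) (Proj X) = 0" by (simp add: Proj_def gi_sum_right gi_scale_right gauss)
  then have "gi (tau i j) X = gi (tau i j) (Proj X + gi Nx X *\<^sub>R Nx)" using decomp[of X] by simp
  also have "\<dots> = gi Nx X * gi (tau i j) Nx" by (simp add: gi_add_right gi_scale_right \<open>gi (tau i j) (Proj X) = 0\<close>)
  finally show ?thesis .
qed

lemma claim5:
  "(\<Sum>d\<in>UNIV. \<Sum>t\<in>UNIV. \<Sum>i\<in>UNIV. \<Sum>j\<in>UNIV. \<Sum>a\<in>UNIV.
      lower g (f x) Wp $ d * lower g (f x) Wp $ t * Acoef g f x i d * Acoef g f x j t * sff g f x a i j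
      * lower g (f x) X $ a)
   = - (gi (push f x (grad_h g f (wfun g W f N) x)) Wp + dirderiv (normsq g W) (f x) Nx / 2) * gi Nx X"
proof -
  let ?Wl = "lower g (f x) Wp"
  have "(\<Sum>d\<in>UNIV. \<Sum>t\<in>UNIV. \<Sum>i\<in>UNIV. \<Sum>j\<in>UNIV. \<Sum>a\<in>UNIV.
      ?Wl $ d * ?Wl $ t * Acoef g f x i d * Acoef g f x j t * sff g f x a i j * lower g (f x) X $ a)
    = (\<Sum>i\<in>UNIV. \<Sum>j\<in>UNIV. \<Sum>d\<in>UNIV. \<Sum>t\<in>UNIV. \<Sum>a\<in>UNIV.
      ?Wl $ d * ?Wl $ t * Acoef g f x i d * Acoef g f x j t * sff g f x a i j * lower g (f x) X $ a)"
    by (rule sum4_perm)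
  also have "\<dots> = (\<Sum>i\<in>UNIV. \<Sum>j\<in>UNIV. (\<Sum>d\<in>UNIV. ?Wl $ d * Acoef g f x i d)
       * (\<Sum>t\<in>UNIV. ?Wl $ t * Acoef g f x j t) * (\<Sum>a\<in>UNIV. tau i j $ a * lower g (f x) X $ a))"
  proof -
    have inner: "(\<Sum>d\<in>UNIV. \<Sum>t\<in>UNIV. \<Sum>a\<in>UNIV.
      ?Wl $ d * ?Wl $ t * Acoef g f x i d * Acoef g f x j t * sff g f x a i j * lower g (f x) X $ a)
      = (\<Sum>d\<in>UNIV. ?Wl $ d * Acoef g f x i d)
       * (\<Sum>t\<in>UNIV. ?Wl $ t * Acoef g f x j t) * (\<Sum>a\<in>UNIV. tau i j $ a * lower g (f x) X $ a)" for i j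
    proof -
      have "(\<Sum>d\<in>UNIV. \<Sum>t\<in>UNIV. \<Sum>a\<in>UNIV.
        ?Wl $ d * ?Wl $ t * Acoef g f x i d * Acoef g f x j t * sff g f x a i j * lower g (f x) X $ a)
        = (\<Sum>d\<in>UNIV. \<Sum>t\<in>UNIV. \<Sum>a\<in>UNIV. (?Wl $ d * Acoef g f x i d) * (?Wl $ t * Acoef g f x j t)
            * (tau i j $ a * lower g (f x) X $ a))"
        by (simp add: tau_def mult_ac)
      also have "\<dots> = (\<Sum>d\<in>UNIV. ?Wl $ d * Acoef g f x i d)
       * (\<Sum>t\<in>UNIV. ?Wl $ t * Acoef g f x j t) * (\<Sum>a\<in>UNIV. tau i j $ a * lower g (f x) X $ a)"
        by (rule sum3_prod)
      finally show ?thesis .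
    qed
    show ?thesis by (rule sum.cong[OF refl], rule sum.cong[OF refl], rule inner)
  qed
  also have "\<dots> = (\<Sum>i\<in>UNIV. \<Sum>j\<in>UNIV. cf Wp $ i * cf Wp $ j * (gi Nx X * gi (tau i j) Nx))"
    by (simp only: Wl_A sum_lower tau_X[where X=X])
  also have "\<dots> = gi Nx X * (\<Sum>i\<in>UNIV. \<Sum>j\<in>UNIV. cf Wp $ i * cf Wp $ j * gi (tau i j) Nx)"
    by (simp add: sum_distrib_left mult_ac)
  also have "\<dots> = - (gi (push f x (grad_h g f (wfun g W f N) x)) Wp + dirderiv (normsq g W) (f x) Nx / 2) * gi Nx X"
    by (simp add: claim5_core G_eq)
  finally show ?thesis .
qed

end

theorem lemma2p4:
  fixes U :: "(real^'n::finite) set" and V :: "(real^'m::finite) set"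
    and f :: "real^'n \<Rightarrow> real^'m"
    and g :: "real^'m \<Rightarrow> real^'m^'m"
    and W :: "real^'m \<Rightarrow> real^'m"
    and N :: "real^'n \<Rightarrow> real^'m"
    and H :: "real^'n \<Rightarrow> real" and x :: "real^'n" and X :: "real^'m"
  assumes dim: "CARD('m) = CARD('n) + 1"
    and metric: "riemannian_metric_on V g"
    and imm: "immersion_on U f"
    and fUV: "f ` U \<subseteq> V"
    and killing: "killing_on V g W"
    and small: "\<forall>q\<in>V. normsq g W q < 1"
    and normal: "unit_normal_on U g f N"
    and meancurv: "\<forall>y\<in>U. \<forall>a. (\<Sum>i\<in>UNIV. \<Sum>j\<in>UNIV. hinv g f y $ i $ j * sff g f y a i j)
                         = real CARD('n) * H y * N y $ a"
    and xU: "x \<in> U"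
  shows
   "let p = f x; w = wfun g W f N x; Wl = lower g p (W p); Xl = lower g p X;
        DW = covd_along g W p (push f x (tang_field g W f x));
        NW = dirderiv (normsq g W) p (N x);
        G = g_inner g p (push f x (grad_h g f (wfun g W f N) x)) (W p)
    in (\<Sum>e\<in>UNIV. \<Sum>b\<in>UNIV. \<Sum>a\<in>UNIV. Bup g f x e b * Wl $ b * lower g p (\<chi> c. cov_deriv g W p c e) $ a * W p $ a)
          = g_inner g p DW (W p)
     \<and> (\<Sum>t\<in>UNIV. \<Sum>c\<in>UNIV. Wl $ t * (kdelta t c - Bmix g f x t c) * X $ c) = w * g_inner g p (N x) X
     \<and> (\<Sum>e\<in>UNIV. \<Sum>b\<in>UNIV. \<Sum>a\<in>UNIV. \<Sum>c\<in>UNIV. Bup g f x e b * Wl $ b * lower g p (\<chi> d. cov_deriv g W p d e) $ a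
            * (kdelta a c - Bmix g f x a c) * X $ c)
          = g_inner g p DW (N x) * g_inner g p (N x) X
     \<and> (\<Sum>i\<in>UNIV. \<Sum>j\<in>UNIV. \<Sum>a\<in>UNIV. hinv g f x $ i $ j * sff g f x a i j * Wl $ a) = real CARD('n) * H x * w
     \<and> (\<Sum>d\<in>UNIV. \<Sum>t\<in>UNIV. \<Sum>i\<in>UNIV. \<Sum>j\<in>UNIV. \<Sum>a\<in>UNIV.
            Wl $ d * Wl $ t * Acoef g f x i d * Acoef g f x j t * sff g f x a i j * Xl $ a)
          = - (G + NW / 2) * g_inner g p (N x) X
     \<and> (\<Sum>d\<in>UNIV. \<Sum>t\<in>UNIV. \<Sum>i\<in>UNIV. \<Sum>j\<in>UNIV. \<Sum>a\<in>UNIV.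
            Wl $ d * Wl $ t * Acoef g f x i d * Acoef g f x j t * sff g f x a i j * Wl $ a)
          = - (G + NW / 2) * w
     \<and> g_inner g p DW (N x) = - NW / 2
     \<and> g_inner g p DW (W p) = - NW / 2 * w"
proof -
  have pV: "f x \<in> V" using fUV xU by blast
  interpret hyper V g W f x U N
    by (unfold_locales; (rule metric killing pV dim imm fUV normal xU)?)
  have w: "wfun g W f N x = gi Nx Wp" by (simp add: wfun_def)
  have c4: "(\<Sum>i\<in>UNIV. \<Sum>j\<in>UNIV. \<Sum>a\<in>UNIV. hinv g f x $ i $ j * sff g f x a i j * lower g (f x) Wp $ a)
      = real CARD('n) * H x * gi Nx Wp"
    by (rule claim4) (use meancurv xU in blast)
  show ?thesis
    unfolding Let_def w
    using claim1 claim2[of X] claim3[of X] c4 claim5[of X] claim5[of Wp]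
      covdWt_N covdWt_W push_tang
    by (simp add: mult_ac)
qed

end
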